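(* Let $a(z,\check w)\in\mathrm{End}(V)\{z,\check w\}$ (a distribution not depending on $\bar z$) be OPE-finite, and let $\check h_1,\dots,\check h_r$ be the pole orders of its reduced OPE. If all $\check h_i$ lie in $\check{\mathbb K}$, then $r\le1$, and if $r=1$ then $\check h_1\in\mathbb Z\times\{0\}$.
   Context: $\mathbb K$ of characteristic $0$. $\check z=(z,\bar z)$, $\check w=(w,\bar w)$. A field is an $\mathrm{End}(V)$-valued formal distribution (exponents in $\mathbb K$) whose value on each vector is a vertex series (finite sum of monomials times power series). $(\check z-\check w)^{\check h}=\sum_{\check i\in\mathbb N^2}(-1)^{i+\bar i}\binom hi\binom{\bar h}{\bar i}z^{h-i}\bar z^{\bar h-\bar i}w^i\bar w^{\bar i}$ for $\check h\in\mathbb K^2$. An OPE of $A(\check z,\check w)$ is $A=\sum_i(\check z-\check w)^{-\check h_i}c^i(\check z,\check w)$ with fields $c^i$ ($A$ viewed as a distribution in $\check z,\check w$); OPE-finite means an OPE exists. The OPE is reduced if $\check h_i-\check h_j\notin\mathbb Z^2$ for $i\ne j$ and no $(\check z-\check w)^{-\check n}c^i$ with $\check n\in\mathbb N^2\setminus\{0\}$ is a field; the reduced OPE is unique and its exponents $\check h_i$ are the pole orders. $\check{\mathbb K}=\{\check h\in\mathbb K^2:h-\bar h\in\mathbb Z\}$. *)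

theory Defs
  imports Complex_Main
begin

text \<open>
  An End(V)-valued formal distribution in the variables z, zbar, w, wbar with exponents
  in K is a map D from exponent quadruples (e1,e2,e3,e4) to End(V); D (e1,e2,e3,e4) is
  the coefficient of the monomial z^e1 zbar^e2 w^e3 wbar^e4.
\<close>

type_synonym ('k, 'v) dist = "'k \<times> 'k \<times> 'k \<times> 'k \<Rightarrow> 'v \<Rightarrow> 'v"

definition end_dist :: "('k::field_char_0 \<Rightarrow> 'v::ab_group_add \<Rightarrow> 'v) \<Rightarrow> ('k, 'v) dist \<Rightarrow> bool" where
  "end_dist scale D \<longleftrightarrow> (\<forall>e. Vector_Spaces.linear scale scale (D e))"

definition power_series4 :: "('k::field_char_0 \<times> 'k \<times> 'k \<times> 'k \<Rightarrow> 'v::zero) \<Rightarrow> bool" where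
  "power_series4 P \<longleftrightarrow> (\<forall>e1 e2 e3 e4. P (e1,e2,e3,e4) \<noteq> 0 \<longrightarrow>
      e1 \<in> \<nat> \<and> e2 \<in> \<nat> \<and> e3 \<in> \<nat> \<and> e4 \<in> \<nat>)"

text \<open>Vertex series: a finite sum of monomials times power series.\<close>
definition vertex_series4 :: "('k::field_char_0 \<times> 'k \<times> 'k \<times> 'k \<Rightarrow> 'v::comm_monoid_add) \<Rightarrow> bool" where
  "vertex_series4 f \<longleftrightarrow> (\<exists>S P. finite S \<and> (\<forall>s\<in>S. power_series4 (P s)) \<and>
      (\<forall>e1 e2 e3 e4. f (e1,e2,e3,e4) =
         (\<Sum>(s1,s2,s3,s4)\<in>S. P (s1,s2,s3,s4) (e1 - s1, e2 - s2, e3 - s3, e4 - s4))))"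

definition is_field :: "('k::field_char_0 \<Rightarrow> 'v::ab_group_add \<Rightarrow> 'v) \<Rightarrow> ('k, 'v) dist \<Rightarrow> bool" where
  "is_field scale D \<longleftrightarrow> end_dist scale D \<and> (\<forall>v. vertex_series4 (\<lambda>e. D e v))"

text \<open>Multiplication of a distribution c by
  (zc - wc)^(h,hb) = sum_{i,ib} (-1)^(i+ib) (h choose i) (hb choose ib) z^(h-i) zbar^(hb-ib) w^i wbar^ib.
  The coefficient at (e1,e2,e3,e4) applied to v is the sum over all (i,ib) in N^2 of the
  corresponding terms; this sum is finite (on fields, which is the only case where it is used),
  and we sum over the (finite) set of indices where the term of c is nonzero.\<close>
definition mult_pow :: "('k::field_char_0 \<Rightarrow> 'v::ab_group_add \<Rightarrow> 'v) \<Rightarrow> 'k \<Rightarrow> 'k \<Rightarrow> ('k, 'v) dist \<Rightarrow> ('k, 'v) dist" where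
  "mult_pow scale h hb c = (\<lambda>(e1, e2, e3, e4). \<lambda>v.
     \<Sum>p\<in>{p :: nat \<times> nat. c (e1 - h + of_nat (fst p), e2 - hb + of_nat (snd p), e3 - of_nat (fst p), e4 - of_nat (snd p)) v \<noteq> 0}.
       scale ((-1) ^ (fst p + snd p) * (h gchoose (fst p)) * (hb gchoose (snd p)))
             (c (e1 - h + of_nat (fst p), e2 - hb + of_nat (snd p), e3 - of_nat (fst p), e4 - of_nat (snd p)) v))"

text \<open>An OPE of A with r terms, pole orders hs i = (h_i, hb_i) and fields cs i:
  A = sum_i (zc - wc)^(-hs i) cs i.\<close>
definition is_ope :: "('k::field_char_0 \<Rightarrow> 'v::ab_group_add \<Rightarrow> 'v) \<Rightarrow> ('k, 'v) dist \<Rightarrow> nat \<Rightarrow> (nat \<Rightarrow> 'k \<times> 'k) \<Rightarrow> (nat \<Rightarrow> ('k, 'v) dist) \<Rightarrow> bool" where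
  "is_ope scale A r hs cs \<longleftrightarrow>
     (\<forall>i<r. is_field scale (cs i)) \<and>
     (\<forall>e v. A e v = (\<Sum>i<r. mult_pow scale (- fst (hs i)) (- snd (hs i)) (cs i) e v))"

definition ope_finite :: "('k::field_char_0 \<Rightarrow> 'v::ab_group_add \<Rightarrow> 'v) \<Rightarrow> ('k, 'v) dist \<Rightarrow> bool" where
  "ope_finite scale A \<longleftrightarrow> (\<exists>r hs cs. is_ope scale A r hs cs)"

definition reduced_ope :: "('k::field_char_0 \<Rightarrow> 'v::ab_group_add \<Rightarrow> 'v) \<Rightarrow> ('k, 'v) dist \<Rightarrow> nat \<Rightarrow> (nat \<Rightarrow> 'k \<times> 'k) \<Rightarrow> (nat \<Rightarrow> ('k, 'v) dist) \<Rightarrow> bool" where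
  "reduced_ope scale A r hs cs \<longleftrightarrow>
     is_ope scale A r hs cs \<and>
     (\<forall>i<r. cs i \<noteq> (\<lambda>e v. 0)) \<and>
     (\<forall>i<r. \<forall>j<r. i \<noteq> j \<longrightarrow>
        \<not> (fst (hs i) - fst (hs j) \<in> \<int> \<and> snd (hs i) - snd (hs j) \<in> \<int>)) \<and>
     (\<forall>i<r. \<forall>n nb :: nat. (n, nb) \<noteq> (0, 0) \<longrightarrow>
        \<not> is_field scale (mult_pow scale (- of_nat n) (- of_nat nb) (cs i)))"

definition Kcheck :: "('k::field_char_0 \<times> 'k) set" where
  "Kcheck = {(h, hb). h - hb \<in> \<int>}"

definition indep_zbar :: "('k::field_char_0, 'v::zero) dist \<Rightarrow> bool" where
  "indep_zbar A \<longleftrightarrow> (\<forall>e1 e2 e3 e4 v. e2 \<noteq> 0 \<longrightarrow> A (e1, e2, e3, e4) v = 0)"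

end

theory Submission
  imports Defs
begin

lemma sum_single:
  assumes "finite A" "a \<in> A" "\<And>x. x \<in> A \<Longrightarrow> x \<noteq> a \<Longrightarrow> f x = (0::'b::comm_monoid_add)"
  shows "sum f A = f a"
proof -
  have "sum f A = f a + sum f (A - {a})" using assms by (simp add: sum.remove)
  also have "sum f (A - {a}) = 0" using assms by (intro sum.neutral) auto
  finally show ?thesis by simp
qed

lemma Nats_diff_bound:
  fixes a :: "'k::field_char_0"
  assumes "a - of_nat k \<in> \<nat>" "a = of_nat n"
  shows "k \<le> n"
proof -
  from assms(1) obtain m where "a - of_nat k = of_nat m" by (auto elim: Nats_cases)
  then have "of_nat n = (of_nat (k + m) :: 'k)" using assms(2) by (simp add: algebra_simps)
  then have "n = k + m" using of_nat_eq_iff by blast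
  then show ?thesis by simp
qed

lemma exists_bound_D:
  fixes A :: "'k::field_char_0 set"
  assumes "finite A"
  shows "\<exists>D::nat. \<forall>a\<in>A. \<forall>k. a - of_nat k \<in> \<nat> \<longrightarrow> k < D"
  using assms
proof (induction A rule: finite_induct)
  case empty then show ?case by simp
next
  case (insert x A)
  then obtain D where D: "\<forall>a\<in>A. \<forall>k. a - of_nat k \<in> \<nat> \<longrightarrow> k < D" by blast
  show ?case
  proof (cases "x \<in> \<nat>")
    case True
    then obtain n where n: "x = of_nat n" by (auto elim: Nats_cases)
    have "\<forall>k. x - of_nat k \<in> \<nat> \<longrightarrow> k < max D (Suc n)"
      using Nats_diff_bound[OF _ n] by (meson le_imp_less_Suc less_max_iff_disj)
    then show ?thesis using D by (metis insert_iff less_max_iff_disj)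
  next
    case False
    have "\<forall>k. x - of_nat k \<notin> \<nat>"
    proof (intro allI notI)
      fix k assume "x - of_nat k \<in> \<nat>"
      then have "x - of_nat k + of_nat k \<in> \<nat>" by (intro Nats_add) auto
      with False show False by simp
    qed
    then show ?thesis using D by auto
  qed
qed

lemma exists_bound_L:
  fixes A :: "'k::field_char_0 set"
  assumes "finite A"
  shows "\<exists>L::nat. \<forall>a\<in>A. a \<in> \<int> \<longrightarrow> a + of_nat L \<in> \<nat>"
  using assms
proof (induction A rule: finite_induct)
  case empty then show ?case by simp
next
  case (insert x A)
  then obtain L where L: "\<forall>a\<in>A. a \<in> \<int> \<longrightarrow> a + of_nat L \<in> \<nat>" by blast
  show ?case
  proof (cases "x \<in> \<int>")
    case True
    then obtain m where m: "x = of_int m" by (auto elim: Ints_cases)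
    define L' where "L' = max L (nat (- m))"
    have mono: "a + of_nat L' \<in> \<nat>" if "a \<in> A" "a \<in> \<int>" for a
    proof -
      have le: "L \<le> L'" by (simp add: L'_def)
      have "a + of_nat L' = (a + of_nat L) + of_nat (L' - L)"
        using le by (simp add: of_nat_diff)
      also have "\<dots> \<in> \<nat>" by (rule Nats_add) (use L that in auto)
      finally show ?thesis .
    qed
    have "x + of_nat L' = of_int (m + int L')" using m by simp
    also have "m + int L' = int (nat (m + int L'))" unfolding L'_def by linarith
    finally have "x + of_nat L' \<in> \<nat>" by (metis of_int_of_nat_eq of_nat_in_Nats)
    then show ?thesis using mono by auto
  next
    case False
    then show ?thesis using L by auto
  qed
qed

section \<open>Supports\<close>

definition vsupp :: "('k::field_char_0 \<times> 'k \<times> 'k \<times> 'k \<Rightarrow> 'v::zero) \<Rightarrow> ('k \<times> 'k \<times> 'k \<times> 'k) set \<Rightarrow> bool" where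
  "vsupp f S \<longleftrightarrow> (\<forall>e1 e2 e3 e4. f (e1,e2,e3,e4) \<noteq> 0 \<longrightarrow>
     (\<exists>s1 s2 s3 s4. (s1,s2,s3,s4) \<in> S \<and> e1 - s1 \<in> \<nat> \<and> e2 - s2 \<in> \<nat> \<and> e3 - s3 \<in> \<nat> \<and> e4 - s4 \<in> \<nat>))"

lemma vs_vsupp:
  fixes f :: "'k::field_char_0 \<times> 'k \<times> 'k \<times> 'k \<Rightarrow> 'v::comm_monoid_add"
  assumes "vertex_series4 f"
  shows "\<exists>S. finite S \<and> vsupp f S"
proof -
  obtain S P where S: "finite S" "\<forall>s\<in>S. power_series4 (P s)"
    "\<forall>e1 e2 e3 e4. f (e1,e2,e3,e4) =
         (\<Sum>(s1,s2,s3,s4)\<in>S. P (s1,s2,s3,s4) (e1 - s1, e2 - s2, e3 - s3, e4 - s4))"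
    using assms unfolding vertex_series4_def by blast
  have "vsupp f S"
    unfolding vsupp_def
  proof (intro allI impI)
    fix e1 e2 e3 e4 assume "f (e1,e2,e3,e4) \<noteq> 0"
    then have "(\<Sum>(s1,s2,s3,s4)\<in>S. P (s1,s2,s3,s4) (e1 - s1, e2 - s2, e3 - s3, e4 - s4)) \<noteq> 0"
      using S(3) by simp
    then obtain x where x: "x \<in> S" "(case x of (s1,s2,s3,s4) \<Rightarrow> P (s1,s2,s3,s4) (e1 - s1, e2 - s2, e3 - s3, e4 - s4)) \<noteq> 0"
      using sum.not_neutral_contains_not_neutral by blast
    obtain s1 s2 s3 s4 where xs: "x = (s1,s2,s3,s4)" by (cases x) auto
    have "P x (e1 - s1, e2 - s2, e3 - s3, e4 - s4) \<noteq> 0" using x xs by simp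
    then have "e1 - s1 \<in> \<nat> \<and> e2 - s2 \<in> \<nat> \<and> e3 - s3 \<in> \<nat> \<and> e4 - s4 \<in> \<nat>"
      using S(2) x(1) unfolding power_series4_def by blast
    then show "\<exists>s1 s2 s3 s4. (s1,s2,s3,s4) \<in> S \<and> e1 - s1 \<in> \<nat> \<and> e2 - s2 \<in> \<nat> \<and> e3 - s3 \<in> \<nat> \<and> e4 - s4 \<in> \<nat>"
      using x(1) xs by blast
  qed
  then show ?thesis using S(1) by blast
qed

lemma vsupp_vs:
  fixes f :: "'k::field_char_0 \<times> 'k \<times> 'k \<times> 'k \<Rightarrow> 'v::comm_monoid_add"
  assumes fin: "finite S" and vs: "vsupp f S"
  shows "vertex_series4 f"
proof -
  define cov :: "('k \<times> 'k \<times> 'k \<times> 'k) \<Rightarrow> ('k \<times> 'k \<times> 'k \<times> 'k) \<Rightarrow> bool"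
    where "cov = (\<lambda>(s1,s2,s3,s4) (e1,e2,e3,e4).
      e1 - s1 \<in> (\<nat>::'k set) \<and> e2 - s2 \<in> \<nat> \<and> e3 - s3 \<in> \<nat> \<and> e4 - s4 \<in> \<nat>)"
  define own :: "('k \<times> 'k \<times> 'k \<times> 'k) \<Rightarrow> ('k \<times> 'k \<times> 'k \<times> 'k)" where "own = (\<lambda>e. SOME s. s \<in> S \<and> cov s e)"
  define P :: "('k \<times> 'k \<times> 'k \<times> 'k) \<Rightarrow> ('k \<times> 'k \<times> 'k \<times> 'k) \<Rightarrow> 'v"
    where "P = (\<lambda>(s1,s2,s3,s4) (x1,x2,x3,x4).
      if x1 \<in> (\<nat>::'k set) \<and> x2 \<in> \<nat> \<and> x3 \<in> \<nat> \<and> x4 \<in> \<nat> \<and> own (x1+s1,x2+s2,x3+s3,x4+s4) = (s1,s2,s3,s4)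
      then f (x1+s1,x2+s2,x3+s3,x4+s4) else 0)"
  have ps: "power_series4 (P s)" for s
    unfolding power_series4_def P_def by (cases s) (auto split: if_splits)
  have eq: "f (e1,e2,e3,e4) =
         (\<Sum>(s1,s2,s3,s4)\<in>S. P (s1,s2,s3,s4) (e1 - s1, e2 - s2, e3 - s3, e4 - s4))" for e1 e2 e3 e4
  proof -
    let ?e = "(e1,e2,e3,e4)"
    have trm: "(case s of (s1,s2,s3,s4) \<Rightarrow> P (s1,s2,s3,s4) (e1 - s1, e2 - s2, e3 - s3, e4 - s4))
        = (if cov s ?e \<and> own ?e = s then f ?e else 0)" for s
      by (cases s) (simp add: P_def cov_def)
    show ?thesis
    proof (cases "f ?e = 0")
      case True
      show ?thesis unfolding trm True by simp
    next
      case False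
      then have "\<exists>s. s \<in> S \<and> cov s ?e" using vs unfolding vsupp_def cov_def by fastforce
      then have own: "own ?e \<in> S \<and> cov (own ?e) ?e" unfolding own_def by (rule someI_ex)
      have "(\<Sum>s\<in>S. (if cov s ?e \<and> own ?e = s then f ?e else 0)) = (\<Sum>s\<in>S. (if own ?e = s then f ?e else 0))"
        using own by (intro sum.cong) auto
      also have "\<dots> = f ?e" using own fin by simp
      finally show ?thesis unfolding trm by simp
    qed
  qed
  show ?thesis unfolding vertex_series4_def using fin ps eq by blast
qed

definition wsupp :: "('k::field_char_0, 'v::zero) dist \<Rightarrow> 'v \<Rightarrow> ('k \<times> 'k) set \<Rightarrow> bool" where
  "wsupp Y v S \<longleftrightarrow> (\<forall>e1 e2 e3 e4. Y (e1,e2,e3,e4) v \<noteq> 0 \<longrightarrow>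
     (\<exists>s3 s4. (s3,s4) \<in> S \<and> e3 - s3 \<in> \<nat> \<and> e4 - s4 \<in> \<nat>))"

definition wlb :: "('k::field_char_0, 'v::zero) dist \<Rightarrow> bool" where
  "wlb Y \<longleftrightarrow> (\<forall>v. \<exists>S. finite S \<and> wsupp Y v S)"

definition asupp :: "('k::field_char_0, 'v::zero) dist \<Rightarrow> 'v \<Rightarrow> ('k \<times> 'k) set \<Rightarrow> bool" where
  "asupp Y v S \<longleftrightarrow> (\<forall>e1 e2 e3 e4. Y (e1,e2,e3,e4) v \<noteq> 0 \<longrightarrow>
     (\<exists>s2 s4. (s2,s4) \<in> S \<and> e2 - s2 \<in> \<nat> \<and> e4 - s4 \<in> \<nat>))"

definition alb :: "('k::field_char_0, 'v::zero) dist \<Rightarrow> bool" where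
  "alb Y \<longleftrightarrow> (\<forall>v. \<exists>S. finite S \<and> asupp Y v S)"

definition boxM :: "('k::field_char_0, 'v::zero) dist \<Rightarrow> 'v \<Rightarrow> 'k \<Rightarrow> 'k \<Rightarrow> nat \<Rightarrow> bool" where
  "boxM Y v e3 e4 M \<longleftrightarrow> (\<forall>x1 x2 p1 p2. Y (x1, x2, e3 - of_nat p1, e4 - of_nat p2) v \<noteq> 0 \<longrightarrow> p1 \<le> M \<and> p2 \<le> M)"

lemma field_vsupp:
  assumes "is_field scale c"
  shows "\<exists>S. finite S \<and> vsupp (\<lambda>e. c e v) S"
  using assms vs_vsupp unfolding is_field_def by blast

lemma field_wlb:
  assumes "is_field scale c"
  shows "wlb c"
  unfolding wlb_def
proof
  fix v
  obtain S where S: "finite S" "vsupp (\<lambda>e. c e v) S" using field_vsupp[OF assms] by blast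
  have vs: "\<forall>e1 e2 e3 e4. c (e1,e2,e3,e4) v \<noteq> 0 \<longrightarrow>
     (\<exists>s1 s2 s3 s4. (s1,s2,s3,s4) \<in> S \<and> e1 - s1 \<in> \<nat> \<and> e2 - s2 \<in> \<nat> \<and> e3 - s3 \<in> \<nat> \<and> e4 - s4 \<in> \<nat>)"
    using S(2) unfolding vsupp_def by simp
  have "wsupp c v ((\<lambda>(s1,s2,s3,s4). (s3,s4)) ` S)"
    unfolding wsupp_def
  proof (intro allI impI)
    fix e1 e2 e3 e4 assume "c (e1,e2,e3,e4) v \<noteq> 0"
    then obtain s1 s2 s3 s4 where s: "(s1,s2,s3,s4) \<in> S" "e3 - s3 \<in> \<nat>" "e4 - s4 \<in> \<nat>"
      using vs by blast
    have "(s3,s4) \<in> (\<lambda>(s1,s2,s3,s4). (s3,s4)) ` S"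
      using s(1) by (rule rev_image_eqI) simp
    then show "\<exists>s3 s4. (s3,s4) \<in> (\<lambda>(s1,s2,s3,s4). (s3,s4)) ` S \<and> e3 - s3 \<in> \<nat> \<and> e4 - s4 \<in> \<nat>"
      using s by blast
  qed
  then show "\<exists>S. finite S \<and> wsupp c v S" using S(1) by blast
qed

lemma field_alb:
  assumes "is_field scale c"
  shows "alb c"
  unfolding alb_def
proof
  fix v
  obtain S where S: "finite S" "vsupp (\<lambda>e. c e v) S" using field_vsupp[OF assms] by blast
  have vs: "\<forall>e1 e2 e3 e4. c (e1,e2,e3,e4) v \<noteq> 0 \<longrightarrow>
     (\<exists>s1 s2 s3 s4. (s1,s2,s3,s4) \<in> S \<and> e1 - s1 \<in> \<nat> \<and> e2 - s2 \<in> \<nat> \<and> e3 - s3 \<in> \<nat> \<and> e4 - s4 \<in> \<nat>)"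
    using S(2) unfolding vsupp_def by simp
  have "asupp c v ((\<lambda>(s1,s2,s3,s4). (s2,s4)) ` S)"
    unfolding asupp_def
  proof (intro allI impI)
    fix e1 e2 e3 e4 assume "c (e1,e2,e3,e4) v \<noteq> 0"
    then obtain s1 s2 s3 s4 where s: "(s1,s2,s3,s4) \<in> S" "e2 - s2 \<in> \<nat>" "e4 - s4 \<in> \<nat>"
      using vs by blast
    have "(s2,s4) \<in> (\<lambda>(s1,s2,s3,s4). (s2,s4)) ` S"
      using s(1) by (rule rev_image_eqI) simp
    then show "\<exists>s2 s4. (s2,s4) \<in> (\<lambda>(s1,s2,s3,s4). (s2,s4)) ` S \<and> e2 - s2 \<in> \<nat> \<and> e4 - s4 \<in> \<nat>"
      using s by blast
  qed
  then show "\<exists>S. finite S \<and> asupp c v S" using S(1) by blast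
qed

lemma wlb_boxM:
  assumes "wlb Y"
  shows "\<exists>M. boxM Y v e3 e4 M"
proof -
  obtain S where S: "finite S" "wsupp Y v S" using assms unfolding wlb_def by blast
  define A where "A = (\<lambda>(s3,s4). e3 - s3) ` S \<union> (\<lambda>(s3,s4). e4 - s4) ` S"
  have "finite A" using S(1) unfolding A_def by simp
  then obtain D where D: "\<forall>a\<in>A. \<forall>k. a - of_nat k \<in> \<nat> \<longrightarrow> k < D" using exists_bound_D by blast
  have "boxM Y v e3 e4 D"
    unfolding boxM_def
  proof (intro allI impI)
    fix x1 x2 p1 p2 assume "Y (x1, x2, e3 - of_nat p1, e4 - of_nat p2) v \<noteq> 0"
    then obtain s3 s4 where s: "(s3,s4) \<in> S" "e3 - of_nat p1 - s3 \<in> \<nat>" "e4 - of_nat p2 - s4 \<in> \<nat>"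
      using S(2) unfolding wsupp_def by blast
    have "e3 - s3 \<in> A" "e4 - s4 \<in> A" using s(1) unfolding A_def by force+
    moreover have "(e3 - s3) - of_nat p1 \<in> \<nat>" "(e4 - s4) - of_nat p2 \<in> \<nat>" using s
      by (simp_all add: algebra_simps)
    ultimately show "p1 \<le> D \<and> p2 \<le> D" using D by (meson less_imp_le)
  qed
  then show ?thesis by blast
qed

lemma boxM_mono: "boxM Y v e3 e4 M \<Longrightarrow> M \<le> M' \<Longrightarrow> boxM Y v e3 e4 M'"
  unfolding boxM_def by (meson order_trans)

lemma boxM_shift:
  assumes "boxM Y v e3 e4 M"
  shows "boxM Y v (e3 - of_nat q1) (e4 - of_nat q2) M"
  unfolding boxM_def
proof (intro allI impI)
  fix x1 x2 p1 p2
  assume "Y (x1, x2, e3 - of_nat q1 - of_nat p1, e4 - of_nat q2 - of_nat p2) v \<noteq> 0"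
  then have "Y (x1, x2, e3 - of_nat (q1 + p1), e4 - of_nat (q2 + p2)) v \<noteq> 0"
    by (simp add: algebra_simps)
  then have "q1 + p1 \<le> M \<and> q2 + p2 \<le> M" using assms unfolding boxM_def by blast
  then show "p1 \<le> M \<and> p2 \<le> M" by simp
qed

lemma mult_pow_nz:
  assumes "mult_pow scale h hb Y (e1,e2,e3,e4) v \<noteq> 0"
  shows "\<exists>p1 p2. Y (e1 - h + of_nat p1, e2 - hb + of_nat p2, e3 - of_nat p1, e4 - of_nat p2) v \<noteq> 0 \<and>
     scale ((-1) ^ (p1 + p2) * (h gchoose p1) * (hb gchoose p2))
       (Y (e1 - h + of_nat p1, e2 - hb + of_nat p2, e3 - of_nat p1, e4 - of_nat p2) v) \<noteq> 0"
proof -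
  let ?NZ = "{p :: nat \<times> nat. Y (e1 - h + of_nat (fst p), e2 - hb + of_nat (snd p), e3 - of_nat (fst p), e4 - of_nat (snd p)) v \<noteq> 0}"
  let ?t = "\<lambda>p. scale ((-1) ^ (fst p + snd p) * (h gchoose (fst p)) * (hb gchoose (snd p)))
             (Y (e1 - h + of_nat (fst p), e2 - hb + of_nat (snd p), e3 - of_nat (fst p), e4 - of_nat (snd p)) v)"
  have "sum ?t ?NZ \<noteq> 0" using assms by (simp add: mult_pow_def)
  then obtain p where "p \<in> ?NZ" "?t p \<noteq> 0" by (rule sum.not_neutral_contains_not_neutral)
  then show ?thesis by (intro exI[of _ "fst p"] exI[of _ "snd p"]) simp
qed

lemma wlb_mult_pow:
  assumes "wlb Y"
  shows "wlb (mult_pow scale h hb Y)"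
  unfolding wlb_def
proof
  fix v
  obtain S where S: "finite S" "wsupp Y v S" using assms unfolding wlb_def by blast
  have "wsupp (mult_pow scale h hb Y) v S"
    unfolding wsupp_def
  proof (intro allI impI)
    fix e1 e2 e3 e4 assume "mult_pow scale h hb Y (e1, e2, e3, e4) v \<noteq> 0"
    then obtain p1 p2 where "Y (e1 - h + of_nat p1, e2 - hb + of_nat p2, e3 - of_nat p1, e4 - of_nat p2) v \<noteq> 0"
      using mult_pow_nz by blast
    then obtain s3 s4 where s: "(s3,s4) \<in> S" "e3 - of_nat p1 - s3 \<in> \<nat>" "e4 - of_nat p2 - s4 \<in> \<nat>"
      using S(2) unfolding wsupp_def by blast
    have "(e3 - of_nat p1 - s3) + of_nat p1 \<in> \<nat>" "(e4 - of_nat p2 - s4) + of_nat p2 \<in> \<nat>"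
      using Nats_add[OF s(2) of_nat_in_Nats] Nats_add[OF s(3) of_nat_in_Nats] by blast+
    moreover have "(e3 - of_nat p1 - s3) + of_nat p1 = e3 - s3" "(e4 - of_nat p2 - s4) + of_nat p2 = e4 - s4"
      by simp_all
    ultimately show "\<exists>s3 s4. (s3, s4) \<in> S \<and> e3 - s3 \<in> \<nat> \<and> e4 - s4 \<in> \<nat>" using s(1) by auto
  qed
  then show "\<exists>S. finite S \<and> wsupp (mult_pow scale h hb Y) v S" using S(1) by blast
qed

lemma boxM_mult_pow:
  assumes "boxM Y v e3 e4 M"
  shows "boxM (mult_pow scale h hb Y) v e3 e4 M"
  unfolding boxM_def
proof (intro allI impI)
  fix x1 x2 p1 p2
  assume "mult_pow scale h hb Y (x1, x2, e3 - of_nat p1, e4 - of_nat p2) v \<noteq> 0"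
  then obtain q1 q2 where "Y (x1 - h + of_nat q1, x2 - hb + of_nat q2, e3 - of_nat p1 - of_nat q1, e4 - of_nat p2 - of_nat q2) v \<noteq> 0"
    using mult_pow_nz by blast
  then have "Y (x1 - h + of_nat q1, x2 - hb + of_nat q2, e3 - of_nat (p1 + q1), e4 - of_nat (p2 + q2)) v \<noteq> 0"
    by (simp add: algebra_simps)
  then have "p1 + q1 \<le> M \<and> p2 + q2 \<le> M" using assms unfolding boxM_def by blast
  then show "p1 \<le> M \<and> p2 \<le> M" by simp
qed

lemma boxM_shift3: "boxM Y v e3 e4 M \<Longrightarrow> boxM Y v (e3 - of_nat q) e4 M"
  using boxM_shift[of Y v e3 e4 M q 0] by simp

lemma boxM_shift4: "boxM Y v e3 e4 M \<Longrightarrow> boxM Y v e3 (e4 - of_nat q) M"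
  using boxM_shift[of Y v e3 e4 M 0 q] by simp

lemma finite_int_window:
  fixes \<alpha> \<beta> :: "'k::field_char_0"
  shows "finite {k::int. \<alpha> + of_int k \<in> \<nat> \<and> \<beta> - of_int k \<in> \<nat>}"
proof (cases "{k::int. \<alpha> + of_int k \<in> \<nat> \<and> \<beta> - of_int k \<in> \<nat>} = {}")
  case True then show ?thesis by (simp only: True finite.emptyI)
next
  case False
  then obtain k0 where k0: "\<alpha> + of_int k0 \<in> \<nat>" "\<beta> - of_int k0 \<in> \<nat>" by blast
  then obtain n0 n0' where n0: "\<alpha> + of_int k0 = of_nat n0" "\<beta> - of_int k0 = of_nat n0'"
    by (auto elim!: Nats_cases)
  have "{k::int. \<alpha> + of_int k \<in> \<nat> \<and> \<beta> - of_int k \<in> \<nat>} \<subseteq> {k0 - int n0 .. k0 + int n0'}"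
  proof
    fix k assume "k \<in> {k::int. \<alpha> + of_int k \<in> \<nat> \<and> \<beta> - of_int k \<in> \<nat>}"
    then obtain n n' where n: "\<alpha> + of_int k = of_nat n" "\<beta> - of_int k = of_nat n'"
      by (auto elim!: Nats_cases)
    have a: "(of_int k :: 'k) = of_nat n - \<alpha>" using n(1) by (simp add: eq_diff_eq add.commute)
    have b: "(of_int k0 :: 'k) = of_nat n0 - \<alpha>" using n0(1) by (simp add: eq_diff_eq add.commute)
    have c: "(of_int k :: 'k) = \<beta> - of_nat n'" using n(2) by (metis add.commute diff_eq_eq eq_diff_eq)
    have d: "(of_int k0 :: 'k) = \<beta> - of_nat n0'" using n0(2) by (metis add.commute diff_eq_eq eq_diff_eq)
    have "(of_int (k - k0) :: 'k) = of_int (int n - int n0)" by (simp add: a b)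
    then have 1: "k - k0 = int n - int n0" using of_int_eq_iff by blast
    have "(of_int (k0 - k) :: 'k) = of_int (int n' - int n0')" by (simp add: c d)
    then have 2: "k0 - k = int n' - int n0'" using of_int_eq_iff by blast
    show "k \<in> {k0 - int n0 .. k0 + int n0'}" using 1 2 by simp
  qed
  then show ?thesis using finite_subset by blast
qed

locale vs0 = vector_space scale for scale :: "'k::field_char_0 \<Rightarrow> 'v::ab_group_add \<Rightarrow> 'v"
begin

lemma mult_pow_box:
  assumes "boxM Y v e3 e4 M"
  shows "mult_pow scale h hb Y (e1,e2,e3,e4) v =
    (\<Sum>p1\<le>M. \<Sum>p2\<le>M. scale ((-1) ^ (p1 + p2) * (h gchoose p1) * (hb gchoose p2))
       (Y (e1 - h + of_nat p1, e2 - hb + of_nat p2, e3 - of_nat p1, e4 - of_nat p2) v))"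
proof -
  let ?NZ = "{p :: nat \<times> nat. Y (e1 - h + of_nat (fst p), e2 - hb + of_nat (snd p), e3 - of_nat (fst p), e4 - of_nat (snd p)) v \<noteq> 0}"
  let ?t = "\<lambda>p. scale ((-1) ^ (fst p + snd p) * (h gchoose (fst p)) * (hb gchoose (snd p)))
             (Y (e1 - h + of_nat (fst p), e2 - hb + of_nat (snd p), e3 - of_nat (fst p), e4 - of_nat (snd p)) v)"
  have "mult_pow scale h hb Y (e1,e2,e3,e4) v = sum ?t ?NZ" by (simp add: mult_pow_def)
  also have "\<dots> = sum ?t ({..M} \<times> {..M})"
  proof (rule sum.mono_neutral_left)
    show "?NZ \<subseteq> {..M} \<times> {..M}"
      using assms unfolding boxM_def by (auto simp del: of_nat_add)
  qed auto
  also have "\<dots> = (\<Sum>p1\<le>M. \<Sum>p2\<le>M. ?t (p1,p2))"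
    by (simp add: sum.cartesian_product split_def)
  finally show ?thesis by simp
qed

lemma holo_box:
  assumes "boxM Y v e3 e4 M"
  shows "mult_pow scale h 0 Y (e1,e2,e3,e4) v =
    (\<Sum>p\<le>M. scale ((-1) ^ p * (h gchoose p)) (Y (e1 - h + of_nat p, e2, e3 - of_nat p, e4) v))"
  unfolding mult_pow_box[OF assms]
proof (rule sum.cong[OF refl])
  fix p1 assume "p1 \<in> {..M}"
  have "(\<Sum>p2\<le>M. scale ((-1) ^ (p1 + p2) * (h gchoose p1) * (0 gchoose p2))
       (Y (e1 - h + of_nat p1, e2 - 0 + of_nat p2, e3 - of_nat p1, e4 - of_nat p2) v))
     = scale ((-1) ^ (p1 + 0) * (h gchoose p1) * (0 gchoose 0))
       (Y (e1 - h + of_nat p1, e2 - 0 + of_nat 0, e3 - of_nat p1, e4 - of_nat 0) v)"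
    by (rule sum_single) (auto simp: gbinomial_0_left)
  then show "(\<Sum>p2\<le>M. scale ((-1) ^ (p1 + p2) * (h gchoose p1) * (0 gchoose p2))
       (Y (e1 - h + of_nat p1, e2 - 0 + of_nat p2, e3 - of_nat p1, e4 - of_nat p2) v))
     = scale ((-1) ^ p1 * (h gchoose p1)) (Y (e1 - h + of_nat p1, e2, e3 - of_nat p1, e4) v)"
    by simp
qed

lemma anti_box:
  assumes "boxM Y v e3 e4 M"
  shows "mult_pow scale 0 hb Y (e1,e2,e3,e4) v =
    (\<Sum>p\<le>M. scale ((-1) ^ p * (hb gchoose p)) (Y (e1, e2 - hb + of_nat p, e3, e4 - of_nat p) v))"
proof -
  have "mult_pow scale 0 hb Y (e1,e2,e3,e4) v = (\<Sum>p2\<le>M. scale ((-1) ^ (0 + p2) * (0 gchoose 0) * (hb gchoose p2))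
       (Y (e1 - 0 + of_nat 0, e2 - hb + of_nat p2, e3 - of_nat 0, e4 - of_nat p2) v))"
    unfolding mult_pow_box[OF assms]
    by (rule sum_single) (auto simp: gbinomial_0_left)
  then show ?thesis by simp
qed

lemma fact_ah:
  assumes "wlb c"
  shows "mult_pow scale h hb c = mult_pow scale 0 hb (mult_pow scale h 0 c)"
proof (intro ext)
  fix e :: "'k \<times> 'k \<times> 'k \<times> 'k" and v
  obtain e1 e2 e3 e4 where e: "e = (e1,e2,e3,e4)" by (cases e) auto
  obtain M where M: "boxM c v e3 e4 M" using wlb_boxM[OF assms] by blast
  have MH: "boxM (mult_pow scale h 0 c) v e3 e4 M" using boxM_mult_pow[OF M] .
  have "mult_pow scale 0 hb (mult_pow scale h 0 c) (e1,e2,e3,e4) v =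
     (\<Sum>p2\<le>M. scale ((-1) ^ p2 * (hb gchoose p2)) (mult_pow scale h 0 c (e1, e2 - hb + of_nat p2, e3, e4 - of_nat p2) v))"
    by (rule anti_box[OF MH])
  also have "\<dots> = (\<Sum>p2\<le>M. scale ((-1) ^ p2 * (hb gchoose p2))
      (\<Sum>p1\<le>M. scale ((-1) ^ p1 * (h gchoose p1)) (c (e1 - h + of_nat p1, e2 - hb + of_nat p2, e3 - of_nat p1, e4 - of_nat p2) v)))"
    by (intro sum.cong refl arg_cong[where f="scale _"] holo_box boxM_shift4[OF M])
  also have "\<dots> = (\<Sum>p2\<le>M. \<Sum>p1\<le>M. scale ((-1) ^ (p1 + p2) * (h gchoose p1) * (hb gchoose p2))
      (c (e1 - h + of_nat p1, e2 - hb + of_nat p2, e3 - of_nat p1, e4 - of_nat p2) v))"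
    by (simp add: scale_sum_right power_add mult_ac)
  also have "\<dots> = mult_pow scale h hb c (e1,e2,e3,e4) v"
    unfolding mult_pow_box[OF M] by (rule sum.swap)
  finally show "mult_pow scale h hb c e v = mult_pow scale 0 hb (mult_pow scale h 0 c) e v"
    unfolding e by simp
qed

lemma fact_ha:
  assumes "wlb c"
  shows "mult_pow scale h hb c = mult_pow scale h 0 (mult_pow scale 0 hb c)"
proof (intro ext)
  fix e :: "'k \<times> 'k \<times> 'k \<times> 'k" and v
  obtain e1 e2 e3 e4 where e: "e = (e1,e2,e3,e4)" by (cases e) auto
  obtain M where M: "boxM c v e3 e4 M" using wlb_boxM[OF assms] by blast
  have MH: "boxM (mult_pow scale 0 hb c) v e3 e4 M" using boxM_mult_pow[OF M] .
  have "mult_pow scale h 0 (mult_pow scale 0 hb c) (e1,e2,e3,e4) v =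
     (\<Sum>p1\<le>M. scale ((-1) ^ p1 * (h gchoose p1)) (mult_pow scale 0 hb c (e1 - h + of_nat p1, e2, e3 - of_nat p1, e4) v))"
    by (rule holo_box[OF MH])
  also have "\<dots> = (\<Sum>p1\<le>M. scale ((-1) ^ p1 * (h gchoose p1))
      (\<Sum>p2\<le>M. scale ((-1) ^ p2 * (hb gchoose p2)) (c (e1 - h + of_nat p1, e2 - hb + of_nat p2, e3 - of_nat p1, e4 - of_nat p2) v)))"
    by (intro sum.cong refl arg_cong[where f="scale _"] anti_box boxM_shift3[OF M])
  also have "\<dots> = (\<Sum>p1\<le>M. \<Sum>p2\<le>M. scale ((-1) ^ (p1 + p2) * (h gchoose p1) * (hb gchoose p2))
      (c (e1 - h + of_nat p1, e2 - hb + of_nat p2, e3 - of_nat p1, e4 - of_nat p2) v))"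
    by (simp add: scale_sum_right power_add mult_ac)
  also have "\<dots> = mult_pow scale h hb c (e1,e2,e3,e4) v"
    unfolding mult_pow_box[OF M] by (rule refl)
  finally show "mult_pow scale h hb c e v = mult_pow scale h 0 (mult_pow scale 0 hb c) e v"
    unfolding e by simp
qed


lemma holo_inv:
  assumes box: "\<forall>e3 e4. \<exists>M. boxM Y v e3 e4 M"
    and van: "\<forall>e1 e2 e3 e4. P e2 e4 \<longrightarrow> mult_pow scale h 0 Y (e1,e2,e3,e4) v = 0"
    and P: "P f2 f4"
  shows "Y (f1,f2,f3,f4) v = 0"
proof (rule ccontr)
  assume nz: "Y (f1,f2,f3,f4) v \<noteq> 0"
  obtain M where M: "boxM Y v f3 f4 M" using box by blast
  define J where "J = {j::nat. Y (f1 + of_nat j, f2, f3 - of_nat j, f4) v \<noteq> 0}"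
  have Jsub: "J \<subseteq> {..M}"
  proof
    fix j assume "j \<in> J"
    then have "Y (f1 + of_nat j, f2, f3 - of_nat j, f4 - of_nat 0) v \<noteq> 0" unfolding J_def by simp
    then show "j \<in> {..M}" using M unfolding boxM_def by blast
  qed
  have "0 \<in> J" using nz unfolding J_def by simp
  have finJ: "finite J" using Jsub finite_subset by blast
  define m where "m = Max J"
  have mJ: "m \<in> J" unfolding m_def using finJ \<open>0 \<in> J\<close> by (intro Max_in) auto
  have mmax: "j \<le> m" if "j \<in> J" for j unfolding m_def using finJ that by simp
  have Mm: "boxM Y v (f3 - of_nat m) f4 M" using boxM_shift3[OF M] .
  have "mult_pow scale h 0 Y (f1 + of_nat m + h, f2, f3 - of_nat m, f4) v =
      (\<Sum>p\<le>M. scale ((-1) ^ p * (h gchoose p)) (Y (f1 + of_nat m + h - h + of_nat p, f2, f3 - of_nat m - of_nat p, f4) v))"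
    by (rule holo_box[OF Mm])
  also have "\<dots> = scale ((-1) ^ 0 * (h gchoose 0)) (Y (f1 + of_nat m + h - h + of_nat 0, f2, f3 - of_nat m - of_nat 0, f4) v)"
  proof (rule sum_single)
    fix p assume "p \<in> {..M}" "p \<noteq> 0"
    have "m + p \<notin> J" using mmax \<open>p \<noteq> 0\<close> by fastforce
    then have "Y (f1 + of_nat (m + p), f2, f3 - of_nat (m + p), f4) v = 0" unfolding J_def by simp
    then show "scale ((-1) ^ p * (h gchoose p)) (Y (f1 + of_nat m + h - h + of_nat p, f2, f3 - of_nat m - of_nat p, f4) v) = 0"
      by (simp add: algebra_simps)
  qed auto
  also have "\<dots> = Y (f1 + of_nat m, f2, f3 - of_nat m, f4) v" by simp
  also have "\<dots> \<noteq> 0" using mJ unfolding J_def by simp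
  finally show False using van P by blast
qed

lemma end_dist_mult_pow:
  assumes ed: "end_dist scale c" and w: "wlb c"
  shows "end_dist scale (mult_pow scale h hb c)"
  unfolding end_dist_def
proof
  fix e :: "'k \<times> 'k \<times> 'k \<times> 'k"
  have lin: "c e (x + y) = c e x + c e y" "c e (scale a x) = scale a (c e x)" for e x y a
    using ed unfolding end_dist_def Vector_Spaces.linear_iff by blast+
  obtain e1 e2 e3 e4 where e: "e = (e1,e2,e3,e4)" by (cases e) auto
  have add: "mult_pow scale h hb c e (x + y) = mult_pow scale h hb c e x + mult_pow scale h hb c e y" for x y
  proof -
    obtain M1 where M1: "boxM c x e3 e4 M1" using wlb_boxM[OF w] by blast
    obtain M2 where M2: "boxM c y e3 e4 M2" using wlb_boxM[OF w] by blast
    obtain M3 where M3: "boxM c (x + y) e3 e4 M3" using wlb_boxM[OF w] by blast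
    define M where "M = max M1 (max M2 M3)"
    have B: "boxM c x e3 e4 M" "boxM c y e3 e4 M" "boxM c (x + y) e3 e4 M"
      using boxM_mono[OF M1] boxM_mono[OF M2] boxM_mono[OF M3] unfolding M_def by auto
    show ?thesis
      unfolding e mult_pow_box[OF B(1)] mult_pow_box[OF B(2)] mult_pow_box[OF B(3)]
      by (simp add: lin scale_right_distrib sum.distrib)
  qed
  have hom: "mult_pow scale h hb c e (scale a x) = scale a (mult_pow scale h hb c e x)" for a x
  proof -
    obtain M1 where M1: "boxM c x e3 e4 M1" using wlb_boxM[OF w] by blast
    obtain M2 where M2: "boxM c (scale a x) e3 e4 M2" using wlb_boxM[OF w] by blast
    define M where "M = max M1 M2"
    have B: "boxM c x e3 e4 M" "boxM c (scale a x) e3 e4 M"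
      using boxM_mono[OF M1] boxM_mono[OF M2] unfolding M_def by auto
    show ?thesis
      unfolding e mult_pow_box[OF B(1)] mult_pow_box[OF B(2)]
      by (simp add: lin scale_sum_right mult.commute)
  qed
  show "Vector_Spaces.linear scale scale (mult_pow scale h hb c e)"
    unfolding Vector_Spaces.linear_iff using vector_space_axioms add hom by blast
qed


lemma anti_neg:
  assumes box: "\<forall>e3 e4. \<exists>M. boxM H v e3 e4 M"
    and S: "finite S" "asupp H v S"
    and m: "m \<ge> 1"
    and van: "\<forall>e2 e4. e2 \<noteq> 0 \<longrightarrow> mult_pow scale 0 (of_nat m) H (e1,e2,e3,e4) v = 0"
  shows "H (e1,f2,e3,f4) v = 0"
proof (rule ccontr)
  assume nz: "H (e1,f2,e3,f4) v \<noteq> 0"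
  define J where "J = {k::int. H (e1, f2 + of_int k, e3, f4 - of_int k) v \<noteq> 0}"
  have "J \<subseteq> (\<Union>s\<in>S. {k::int. (f2 - fst s) + of_int k \<in> \<nat> \<and> (f4 - snd s) - of_int k \<in> \<nat>})"
  proof
    fix k assume "k \<in> J"
    then obtain s2 s4 where "(s2,s4) \<in> S" "f2 + of_int k - s2 \<in> \<nat>" "f4 - of_int k - s4 \<in> \<nat>"
      using S(2) unfolding J_def asupp_def by blast
    then show "k \<in> (\<Union>s\<in>S. {k::int. (f2 - fst s) + of_int k \<in> \<nat> \<and> (f4 - snd s) - of_int k \<in> \<nat>})"
      by (intro UN_I[of "(s2,s4)"]) (simp_all add: algebra_simps)
  qed
  moreover have "finite (\<Union>s\<in>S. {k::int. (f2 - fst s) + of_int k \<in> \<nat> \<and> (f4 - snd s) - of_int k \<in> \<nat>})"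
    using S(1) finite_int_window by blast
  ultimately have finJ: "finite J" using finite_subset by blast
  have "0 \<in> J" using nz unfolding J_def by simp
  define kM where "kM = Max J"
  define km where "km = Min J"
  have kMJ: "kM \<in> J" unfolding kM_def using finJ \<open>0 \<in> J\<close> by (intro Max_in) auto
  have kmJ: "km \<in> J" unfolding km_def using finJ \<open>0 \<in> J\<close> by (intro Min_in) auto
  have kMmax: "k \<le> kM" if "k \<in> J" for k unfolding kM_def using finJ that by simp
  have kmmin: "km \<le> k" if "k \<in> J" for k unfolding km_def using finJ that by simp
  have Jz: "H (e1, f2 + of_int k, e3, f4 - of_int k) v = 0" if "k \<notin> J" for k
    using that unfolding J_def by simp
  obtain M1 where M1: "boxM H v e3 (f4 - of_int kM) M1" using box by blast
  have "mult_pow scale 0 (of_nat m) H (e1, f2 + of_int kM + of_nat m, e3, f4 - of_int kM) v =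
     (\<Sum>p\<le>M1. scale ((-1) ^ p * (of_nat m gchoose p))
        (H (e1, f2 + of_int kM + of_nat m - of_nat m + of_nat p, e3, f4 - of_int kM - of_nat p) v))"
    by (rule anti_box[OF M1])
  also have "\<dots> = scale ((-1) ^ 0 * (of_nat m gchoose 0))
        (H (e1, f2 + of_int kM + of_nat m - of_nat m + of_nat 0, e3, f4 - of_int kM - of_nat 0) v)"
  proof (rule sum_single)
    fix p assume "p \<in> {..M1}" "p \<noteq> 0"
    then have "kM + int p \<notin> J" using kMmax by fastforce
    then have "H (e1, f2 + of_int (kM + int p), e3, f4 - of_int (kM + int p)) v = 0" by (rule Jz)
    then show "scale ((-1) ^ p * (of_nat m gchoose p))
        (H (e1, f2 + of_int kM + of_nat m - of_nat m + of_nat p, e3, f4 - of_int kM - of_nat p) v) = 0"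
      by (simp add: algebra_simps)
  qed auto
  also have "\<dots> = H (e1, f2 + of_int kM, e3, f4 - of_int kM) v" by simp
  also have "\<dots> \<noteq> 0" using kMJ unfolding J_def by simp
  finally have top: "f2 + of_int kM + of_nat m = 0" using van by blast
  obtain M2 where M2: "boxM H v e3 (f4 - of_int km + of_nat m) M2" using box by blast
  have "H (e1, f2 + of_int km, e3 - of_nat 0, (f4 - of_int km + of_nat m) - of_nat m) v \<noteq> 0"
    using kmJ unfolding J_def by simp
  then have mM2: "m \<le> M2" using M2 unfolding boxM_def by blast
  have "mult_pow scale 0 (of_nat m) H (e1, f2 + of_int km, e3, f4 - of_int km + of_nat m) v =
     (\<Sum>p\<le>M2. scale ((-1) ^ p * (of_nat m gchoose p))
        (H (e1, f2 + of_int km - of_nat m + of_nat p, e3, f4 - of_int km + of_nat m - of_nat p) v))"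
    by (rule anti_box[OF M2])
  also have "\<dots> = scale ((-1) ^ m * (of_nat m gchoose m))
        (H (e1, f2 + of_int km - of_nat m + of_nat m, e3, f4 - of_int km + of_nat m - of_nat m) v)"
  proof (rule sum_single)
    fix p assume "p \<in> {..M2}" "p \<noteq> m"
    show "scale ((-1) ^ p * (of_nat m gchoose p))
        (H (e1, f2 + of_int km - of_nat m + of_nat p, e3, f4 - of_int km + of_nat m - of_nat p) v) = 0"
    proof (cases "p < m")
      case True
      then have "km - int m + int p \<notin> J" using kmmin by fastforce
      then have "H (e1, f2 + of_int (km - int m + int p), e3, f4 - of_int (km - int m + int p)) v = 0" by (rule Jz)
      then show ?thesis by (simp add: algebra_simps)
    next
      case False
      then have "m < p" using \<open>p \<noteq> m\<close> by simp
      then have "(of_nat m gchoose p :: 'k) = 0"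
        by (simp add: binomial_gbinomial[symmetric])
      then show ?thesis by simp
    qed
  qed (use mM2 in auto)
  also have "\<dots> = scale ((-1) ^ m) (H (e1, f2 + of_int km, e3, f4 - of_int km) v)"
    by (simp add: binomial_gbinomial[symmetric])
  also have "\<dots> \<noteq> 0" using kmJ unfolding J_def by simp
  finally have bot: "f2 + of_int km = 0" using van by blast
  have "f2 + (of_int kM + of_nat m) = f2 + (of_int km :: 'k)" using top bot by (simp add: add.assoc)
  then have "(of_int (kM + int m) :: 'k) = of_int km" by simp
  then have "kM + int m = km" using of_int_eq_iff by blast
  moreover have "km \<le> kM" using kmmin kMJ by blast
  ultimately show False using m by simp
qed

lemma anti_pos_field:
  assumes fc: "is_field scale c"
    and van: "\<forall>e1 e2 e3 e4 v. e2 \<noteq> 0 \<longrightarrow> mult_pow scale 0 hb c (e1,e2,e3,e4) v = 0"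
  shows "is_field scale (mult_pow scale 0 hb c)"
  unfolding is_field_def
proof (intro conjI allI)
  show "end_dist scale (mult_pow scale 0 hb c)"
    using fc field_wlb[OF fc] end_dist_mult_pow unfolding is_field_def by blast
  fix v
  obtain S where S: "finite S" "vsupp (\<lambda>e. c e v) S" using field_vsupp[OF fc] by blast
  let ?S' = "(\<lambda>(s1,s2,s3,s4). (s1,0::'k,s3,s4)) ` S"
  have "vsupp (\<lambda>e. mult_pow scale 0 hb c e v) ?S'"
    unfolding vsupp_def
  proof (intro allI impI)
    fix e1 e2 e3 e4 assume nz: "mult_pow scale 0 hb c (e1,e2,e3,e4) v \<noteq> 0"
    then have e2: "e2 = 0" using van by blast
    obtain p1 p2 where p: "c (e1 - 0 + of_nat p1, e2 - hb + of_nat p2, e3 - of_nat p1, e4 - of_nat p2) v \<noteq> 0"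
      "scale ((-1) ^ (p1 + p2) * (0 gchoose p1) * (hb gchoose p2))
       (c (e1 - 0 + of_nat p1, e2 - hb + of_nat p2, e3 - of_nat p1, e4 - of_nat p2) v) \<noteq> 0"
      using mult_pow_nz[OF nz] by blast
    have "p1 = 0" using p(2) by (auto simp: gbinomial_0_left split: if_splits)
    then have "c (e1, e2 - hb + of_nat p2, e3, e4 - of_nat p2) v \<noteq> 0" using p(1) by simp
    then obtain s1 s2 s3 s4 where s: "(s1,s2,s3,s4) \<in> S" "e1 - s1 \<in> \<nat>" "e3 - s3 \<in> \<nat>" "e4 - of_nat p2 - s4 \<in> \<nat>"
      using S(2) unfolding vsupp_def by fastforce
    have "(e4 - of_nat p2 - s4) + of_nat p2 \<in> \<nat>" using Nats_add[OF s(4) of_nat_in_Nats] .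
    then have "e4 - s4 \<in> \<nat>" by simp
    moreover have "(s1,0,s3,s4) \<in> ?S'" using s(1) by (rule rev_image_eqI) simp
    ultimately have "(s1,0,s3,s4) \<in> ?S' \<and> e1 - s1 \<in> \<nat> \<and> e2 - 0 \<in> \<nat> \<and> e3 - s3 \<in> \<nat> \<and> e4 - s4 \<in> \<nat>"
      using s e2 by simp
    then show "\<exists>s1 s2 s3 s4. (s1, s2, s3, s4) \<in> ?S' \<and> e1 - s1 \<in> \<nat> \<and> e2 - s2 \<in> \<nat> \<and> e3 - s3 \<in> \<nat> \<and> e4 - s4 \<in> \<nat>"
      by blast
  qed
  then show "vertex_series4 (\<lambda>e. mult_pow scale 0 hb c e v)"
    using S(1) by (intro vsupp_vs[of ?S']) auto
qed


section \<open>Independence lemma\<close>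

definition L0 :: "(nat \<Rightarrow> 'v) \<Rightarrow> nat \<Rightarrow> 'v" where
  "L0 F n = scale (of_nat (Suc n)) (F (Suc n)) - scale (of_nat n) (F n)"

definition stp :: "'k \<Rightarrow> (nat \<Rightarrow> 'v) \<Rightarrow> nat \<Rightarrow> 'v" where
  "stp \<rho> F n = L0 F n - scale \<rho> (F n)"

primrec pop :: "'k list \<Rightarrow> (nat \<Rightarrow> 'v) \<Rightarrow> nat \<Rightarrow> 'v" where
  "pop [] F = F"
| "pop (\<rho> # xs) F = stp \<rho> (pop xs F)"

lemma stp_add: "stp \<rho> (\<lambda>n. F n + G n) = (\<lambda>n. stp \<rho> F n + stp \<rho> G n)"
  by (rule ext) (simp add: stp_def L0_def algebra_simps)

lemma stp_diff: "stp \<rho> (\<lambda>n. F n - G n) = (\<lambda>n. stp \<rho> F n - stp \<rho> G n)"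
  by (rule ext) (simp add: stp_def L0_def algebra_simps)

lemma stp_scale: "stp \<rho> (\<lambda>n. scale a (F n)) = (\<lambda>n. scale a (stp \<rho> F n))"
  by (rule ext) (simp add: stp_def L0_def algebra_simps scale_left_commute)

lemma stp_zero: "stp \<rho> (\<lambda>n. 0) = (\<lambda>n. 0)"
  by (rule ext) (simp add: stp_def L0_def)

lemma stp_sum: "stp \<rho> (\<lambda>n. \<Sum>j\<in>A. G j n) = (\<lambda>n. \<Sum>j\<in>A. stp \<rho> (G j) n)"
  by (rule ext) (simp add: stp_def L0_def scale_sum_right sum_subtractf)

lemma pop_diff: "pop xs (\<lambda>n. F n - G n) = (\<lambda>n. pop xs F n - pop xs G n)"
  by (induction xs) (simp_all add: stp_diff)

lemma pop_scale: "pop xs (\<lambda>n. scale a (F n)) = (\<lambda>n. scale a (pop xs F n))"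
  by (induction xs) (simp_all add: stp_scale)

lemma pop_zero: "pop xs (\<lambda>n. 0) = (\<lambda>n. 0)"
  by (induction xs) (simp_all add: stp_zero)

lemma pop_sum: "pop xs (\<lambda>n. \<Sum>j\<in>A. G j n) = (\<lambda>n. \<Sum>j\<in>A. pop xs (G j) n)"
  by (induction xs) (simp_all add: stp_sum)

lemma stp_comm: "stp \<rho> (stp \<sigma> F) = stp \<sigma> (stp \<rho> F)"
proof (rule ext)
  fix n
  show "stp \<rho> (stp \<sigma> F) n = stp \<sigma> (stp \<rho> F) n"
    by (simp add: stp_def L0_def scale_right_diff_distrib scale_left_commute[of \<rho>] scale_left_commute[of \<sigma>] algebra_simps)
qed

lemma pop_stp: "pop xs (stp \<sigma> F) = stp \<sigma> (pop xs F)"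
  by (induction xs) (simp_all add: stp_comm)

lemma pop_append: "pop (xs @ ys) F = pop xs (pop ys F)"
  by (induction xs) simp_all

lemma pop_comm: "pop xs (pop ys F) = pop ys (pop xs F)"
  by (induction ys) (simp_all add: pop_stp)

lemma pop_kill:
  assumes "\<sigma> \<in> set xs" "stp \<sigma> F = (\<lambda>n. 0)"
  shows "pop xs F = (\<lambda>n. 0)"
  using assms
proof (induction xs)
  case Nil then show ?case by simp
next
  case (Cons \<rho> xs)
  show ?case
  proof (cases "\<rho> = \<sigma>")
    case True
    then have "pop (\<rho> # xs) F = pop xs (stp \<sigma> F)" by (simp add: pop_stp)
    then show ?thesis using Cons.prems by (simp add: pop_zero)
  next
    case False
    then have "pop xs F = (\<lambda>n. 0)" using Cons by simp
    then show ?thesis by (simp add: stp_zero)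
  qed
qed

lemma pop_eig:
  assumes "stp \<sigma> F = (\<lambda>n. 0)"
  shows "pop xs F = (\<lambda>n. scale (prod_list (map (\<lambda>\<rho>. \<sigma> - \<rho>) xs)) (F n))"
proof (induction xs)
  case Nil then show ?case by simp
next
  case (Cons \<rho> xs)
  have L: "L0 F n = scale \<sigma> (F n)" for n
    using fun_cong[OF assms, of n] unfolding stp_def by simp
  show ?case
  proof (rule ext)
    fix n
    have "pop (\<rho> # xs) F n = stp \<rho> (\<lambda>n. scale (prod_list (map (\<lambda>\<rho>. \<sigma> - \<rho>) xs)) (F n)) n"
      using Cons by simp
    also have "\<dots> = scale (prod_list (map (\<lambda>\<rho>. \<sigma> - \<rho>) xs)) (stp \<rho> F n)"
      by (simp add: stp_scale)
    also have "stp \<rho> F n = scale (\<sigma> - \<rho>) (F n)"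
      by (simp add: stp_def L scale_left_diff_distrib)
    finally show "pop (\<rho> # xs) F n = scale (prod_list (map (\<lambda>\<rho>. \<sigma> - \<rho>) (\<rho> # xs))) (F n)"
      by (simp add: mult.commute)
  qed
qed

lemma pop_coprime:
  assumes "set xs \<inter> set ys = {}" "pop xs F = (\<lambda>n. 0)" "pop ys F = (\<lambda>n. 0)"
  shows "F = (\<lambda>n. 0)"
  using assms
proof (induction ys arbitrary: F)
  case Nil then show ?case by simp
next
  case (Cons \<sigma> ys)
  define G where "G = pop ys F"
  have sG: "stp \<sigma> G = (\<lambda>n. 0)" using Cons.prems(3) unfolding G_def by simp
  have "pop xs G = pop ys (pop xs F)" unfolding G_def by (rule pop_comm)
  also have "\<dots> = (\<lambda>n. 0)" using Cons.prems(2) by (simp add: pop_zero)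
  finally have "(\<lambda>n. scale (prod_list (map (\<lambda>\<rho>. \<sigma> - \<rho>) xs)) (G n)) = (\<lambda>n. 0)"
    using pop_eig[OF sG] by simp
  moreover have "prod_list (map (\<lambda>\<rho>. \<sigma> - \<rho>) xs) \<noteq> 0"
    using Cons.prems(1) by (auto simp: prod_list_zero_iff)
  ultimately have "G = (\<lambda>n. 0)"
  proof (intro ext)
    fix n
    assume A: "(\<lambda>n. scale (prod_list (map (\<lambda>\<rho>. \<sigma> - \<rho>) xs)) (G n)) = (\<lambda>n. 0)"
      and B: "prod_list (map (\<lambda>\<rho>. \<sigma> - \<rho>) xs) \<noteq> 0"
    have "scale (prod_list (map (\<lambda>\<rho>. \<sigma> - \<rho>) xs)) (G n) = 0" using fun_cong[OF A, of n] by simp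
    then show "G n = 0" using B by simp
  qed
  then show ?case using Cons.IH[of F] Cons.prems(1,2) unfolding G_def by auto
qed


definition cf :: "'k \<Rightarrow> nat \<Rightarrow> 'k" where
  "cf \<beta> p = (-1) ^ p * ((- \<beta>) gchoose p)"

definition Eseq :: "'k \<Rightarrow> 'v \<Rightarrow> nat \<Rightarrow> 'v" where
  "Eseq \<beta> w n = scale (cf \<beta> n) w"

definition Sh :: "(nat \<Rightarrow> 'v) \<Rightarrow> nat \<Rightarrow> 'v" where
  "Sh F n = (case n of 0 \<Rightarrow> 0 | Suc m \<Rightarrow> F m)"

definition conv :: "'k \<Rightarrow> (nat \<Rightarrow> 'v) \<Rightarrow> nat \<Rightarrow> 'v" where
  "conv \<beta> Q n = (\<Sum>p\<le>n. scale (cf \<beta> p) (Q (n - p)))"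

definition lst :: "'k \<Rightarrow> nat \<Rightarrow> 'k list" where
  "lst \<beta> D = map (\<lambda>k. \<beta> - of_nat k) [0..<D]"

lemma cf_0 [simp]: "cf \<beta> 0 = 1" by (simp add: cf_def)

lemma cf_rec: "of_nat (Suc n) * cf \<beta> (Suc n) = (\<beta> + of_nat n) * cf \<beta> n"
proof -
  have H: "of_nat (Suc n) * ((- \<beta>) gchoose Suc n) = (- \<beta> - of_nat n) * ((- \<beta>) gchoose n)"
    using gbinomial_absorption[of n "- \<beta>"] gbinomial_absorb_comp[of "- \<beta>" n] by simp
  have "of_nat (Suc n) * cf \<beta> (Suc n) = (-1) ^ (Suc n) * (of_nat (Suc n) * ((- \<beta>) gchoose Suc n))"
    unfolding cf_def by (simp only: mult_ac)
  also have "\<dots> = (-1) ^ (Suc n) * ((- \<beta> - of_nat n) * ((- \<beta>) gchoose n))" using H by simp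
  also have "\<dots> = (\<beta> + of_nat n) * cf \<beta> n" by (simp add: cf_def algebra_simps)
  finally show ?thesis .
qed

lemma stp_E: "stp \<beta> (Eseq \<beta> w) = (\<lambda>n. 0)"
proof (rule ext)
  fix n
  have "stp \<beta> (Eseq \<beta> w) n = scale (of_nat (Suc n) * cf \<beta> (Suc n) - of_nat n * cf \<beta> n - \<beta> * cf \<beta> n) w"
    by (simp add: stp_def L0_def Eseq_def scale_left_diff_distrib)
  also have "of_nat (Suc n) * cf \<beta> (Suc n) - of_nat n * cf \<beta> n - \<beta> * cf \<beta> n = 0"
    by (simp only: cf_rec) (simp add: algebra_simps)
  finally show "stp \<beta> (Eseq \<beta> w) n = 0" by simp
qed

lemma Sh_E: "Sh (Eseq \<beta> w) = (\<lambda>n. Eseq \<beta> w n - Eseq (\<beta> - 1) w n)"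
proof (rule ext)
  fix n
  show "Sh (Eseq \<beta> w) n = Eseq \<beta> w n - Eseq (\<beta> - 1) w n"
  proof (cases n)
    case 0 then show ?thesis by (simp add: Sh_def Eseq_def)
  next
    case (Suc m)
    have P: "(- \<beta> + 1) gchoose Suc m = ((- \<beta>) gchoose m) + ((- \<beta>) gchoose Suc m)"
      by (rule gbinomial_Suc_Suc)
    have "cf \<beta> m = cf \<beta> (Suc m) - cf (\<beta> - 1) (Suc m)"
      unfolding cf_def using P by (simp add: algebra_simps)
    then show ?thesis using Suc by (simp add: Sh_def Eseq_def scale_left_diff_distrib[symmetric])
  qed
qed

lemma Sh_diff: "Sh (\<lambda>n. F n - G n) = (\<lambda>n. Sh F n - Sh G n)"
  by (rule ext) (simp add: Sh_def split: nat.splits)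

lemma Shpow_diff: "(Sh ^^ d) (\<lambda>n. F n - G n) = (\<lambda>n. (Sh ^^ d) F n - (Sh ^^ d) G n)"
  by (induction d) (simp_all add: Sh_diff)

lemma Shpow_eq: "(Sh ^^ d) F n = (if d \<le> n then F (n - d) else 0)"
proof (induction d arbitrary: n)
  case 0 then show ?case by simp
next
  case (Suc d)
  have "(Sh ^^ Suc d) F n = Sh ((Sh ^^ d) F) n" by simp
  also have "\<dots> = (case n of 0 \<Rightarrow> 0 | Suc m \<Rightarrow> (Sh ^^ d) F m)" by (simp only: Sh_def)
  also have "\<dots> = (if Suc d \<le> n then F (n - Suc d) else 0)"
    by (cases n) (simp_all add: Suc.IH)
  finally show ?case .
qed

lemma lst_Suc: "lst \<beta> (Suc D) = \<beta> # lst (\<beta> - 1) D"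
proof -
  have "[0..<Suc D] = 0 # map Suc [0..<D]" by (simp add: upt_conv_Cons map_Suc_upt)
  then show ?thesis unfolding lst_def by (simp add: algebra_simps)
qed

lemma kill_shift:
  assumes "d < D"
  shows "pop (lst \<beta> D) ((Sh ^^ d) (Eseq \<beta> w)) = (\<lambda>n. 0)"
  using assms
proof (induction d arbitrary: \<beta> D)
  case 0
  then have "\<beta> \<in> set (lst \<beta> D)" unfolding lst_def by force
  then show ?case using pop_kill stp_E by simp
next
  case (Suc d)
  then obtain D' where D': "D = Suc D'" "d < D'" by (cases D) auto
  have "(Sh ^^ Suc d) (Eseq \<beta> w) = (Sh ^^ d) (Sh (Eseq \<beta> w))" by (simp only: funpow_Suc_right comp_def)
  also have "\<dots> = (\<lambda>n. (Sh ^^ d) (Eseq \<beta> w) n - (Sh ^^ d) (Eseq (\<beta> - 1) w) n)"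
    by (simp add: Sh_E Shpow_diff)
  finally have eq: "(Sh ^^ Suc d) (Eseq \<beta> w) = \<dots>" .
  have 1: "pop (lst \<beta> D) ((Sh ^^ d) (Eseq \<beta> w)) = (\<lambda>n. 0)" using Suc.IH Suc.prems by simp
  have "pop (lst (\<beta> - 1) D') ((Sh ^^ d) (Eseq (\<beta> - 1) w)) = (\<lambda>n. 0)" using Suc.IH D' by simp
  then have 2: "pop (lst \<beta> D) ((Sh ^^ d) (Eseq (\<beta> - 1) w)) = (\<lambda>n. 0)"
    using D'(1) by (simp add: lst_Suc stp_zero)
  show ?case unfolding eq pop_diff 1 2 by simp
qed

lemma conv_as_sum:
  assumes "\<forall>k\<ge>D. Q k = 0"
  shows "conv \<beta> Q n = (\<Sum>d<D. (Sh ^^ d) (Eseq \<beta> (Q d)) n)"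
proof -
  have "(\<Sum>d<D. (Sh ^^ d) (Eseq \<beta> (Q d)) n) = (\<Sum>d<D. if d \<in> {..n} then scale (cf \<beta> (n - d)) (Q d) else 0)"
    by (intro sum.cong) (auto simp: Shpow_eq Eseq_def)
  also have "\<dots> = (\<Sum>d\<in>{..<D} \<inter> {..n}. scale (cf \<beta> (n - d)) (Q d))"
    by (rule sum.inter_restrict[symmetric]) simp
  also have "\<dots> = (\<Sum>d\<in>{..n}. scale (cf \<beta> (n - d)) (Q d))"
  proof (rule sum.mono_neutral_left)
    show "\<forall>i\<in>{..n} - {..<D} \<inter> {..n}. scale (cf \<beta> (n - i)) (Q i) = 0"
    proof
      fix i assume "i \<in> {..n} - {..<D} \<inter> {..n}"
      then have "D \<le> i" by auto
      then show "scale (cf \<beta> (n - i)) (Q i) = 0" using assms by simp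
    qed
  qed auto
  also have "\<dots> = (\<Sum>d\<in>{0..n}. scale (cf \<beta> (n - d)) (Q d))" by (simp add: atMost_atLeast0)
  also have "\<dots> = (\<Sum>p\<in>{0..n}. scale (cf \<beta> (n - (n + 0 - p))) (Q (n + 0 - p)))"
    by (rule sum.atLeastAtMost_rev)
  also have "\<dots> = (\<Sum>p\<in>{0..n}. scale (cf \<beta> p) (Q (n - p)))"
    by (intro sum.cong) auto
  finally show ?thesis unfolding conv_def by (simp add: atMost_atLeast0)
qed

lemma conv_zero_imp:
  assumes "\<forall>n. conv \<beta> Q n = 0"
  shows "Q k = 0"
proof (induction k rule: less_induct)
  case (less k)
  have "conv \<beta> Q k = scale (cf \<beta> 0) (Q (k - 0))"
    unfolding conv_def
  proof (rule sum_single)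
    fix p assume "p \<in> {..k}" "p \<noteq> 0"
    then have "Q (k - p) = 0" using less by simp
    then show "scale (cf \<beta> p) (Q (k - p)) = 0" by simp
  qed auto
  then show ?case using assms by simp
qed


lemma IL:
  fixes r D k0 i k :: nat and Q :: "nat \<Rightarrow> nat \<Rightarrow> 'v" and \<beta> :: "nat \<Rightarrow> 'k"
  assumes Qz: "\<forall>j<r. \<forall>k\<ge>D. Q j k = 0"
    and dist: "\<forall>i<r. \<forall>j<r. i \<noteq> j \<longrightarrow> \<beta> i - \<beta> j \<notin> \<int>"
    and hyp: "\<forall>k. k \<noteq> k0 \<longrightarrow> (\<Sum>j<r. conv (\<beta> j) (Q j) k) = 0"
    and i: "i < r" "\<beta> i \<notin> \<int>"
  shows "Q i k = 0"
proof -
  define Fj where "Fj j = (\<lambda>n. \<Sum>d<D. (Sh ^^ d) (Eseq (\<beta> j) (Q j d)) n)" for j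
  have convF: "conv (\<beta> j) (Q j) n = Fj j n" if "j < r" for j n
    using conv_as_sum Qz that unfolding Fj_def by simp
  have killF: "pop (lst (\<beta> j) D) (Fj j) = (\<lambda>n. 0)" for j
  proof -
    have "pop (lst (\<beta> j) D) (Fj j) = (\<lambda>n. \<Sum>d<D. pop (lst (\<beta> j) D) ((Sh ^^ d) (Eseq (\<beta> j) (Q j d))) n)"
      unfolding Fj_def by (rule pop_sum)
    also have "\<dots> = (\<lambda>n. 0)"
      by (rule ext, rule sum.neutral) (simp add: kill_shift)
    finally show ?thesis .
  qed
  define A where "A = (\<Sum>j<r. Fj j k0)"
  define Z where "Z = (\<lambda>n. if n = k0 then A else 0)"
  have Zeq: "Z = (Sh ^^ k0) (Eseq 0 A)"
  proof (rule ext)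
    fix n
    have cf0: "cf 0 m = (if m = 0 then 1 else 0)" for m
      by (simp add: cf_def gbinomial_0_left)
    show "Z n = (Sh ^^ k0) (Eseq 0 A) n"
      unfolding Z_def Shpow_eq Eseq_def cf0 by auto
  qed
  have killZ: "pop (lst 0 (Suc k0)) Z = (\<lambda>n. 0)" unfolding Zeq by (rule kill_shift) simp
  have sumZ: "(\<Sum>j<r. Fj j n) = Z n" for n
  proof (cases "n = k0")
    case True then show ?thesis unfolding Z_def A_def by simp
  next
    case False
    have "(\<Sum>j<r. Fj j n) = (\<Sum>j<r. conv (\<beta> j) (Q j) n)" by (intro sum.cong) (simp_all add: convF)
    also have "\<dots> = 0" using hyp False by blast
    finally show ?thesis unfolding Z_def using False by simp
  qed
  have Fi: "Fj i = (\<lambda>n. Z n - (\<Sum>j\<in>{..<r} - {i}. Fj j n))"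
  proof (rule ext)
    fix n
    have "(\<Sum>j<r. Fj j n) = Fj i n + (\<Sum>j\<in>{..<r} - {i}. Fj j n)"
      by (rule sum.remove) (use i(1) in auto)
    then show "Fj i n = Z n - (\<Sum>j\<in>{..<r} - {i}. Fj j n)" using sumZ[of n] by (simp add: algebra_simps)
  qed
  define xs where "xs = concat (map (\<lambda>j. lst (\<beta> j) D) (filter (\<lambda>j. j \<noteq> i) [0..<r])) @ lst 0 (Suc k0)"
  have popZ: "pop xs Z = (\<lambda>n. 0)" unfolding xs_def pop_append killZ pop_zero ..
  have popFj: "pop xs (Fj j) = (\<lambda>n. 0)" if "j < r" "j \<noteq> i" for j
  proof -
    have "j \<in> set (filter (\<lambda>j. j \<noteq> i) [0..<r])" using that by simp
    then obtain us ws where uw: "filter (\<lambda>j. j \<noteq> i) [0..<r] = us @ j # ws" by (meson in_set_conv_decomp)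
    define R where "R = concat (map (\<lambda>j. lst (\<beta> j) D) ws) @ lst 0 (Suc k0)"
    have "xs = concat (map (\<lambda>j. lst (\<beta> j) D) us) @ lst (\<beta> j) D @ R" unfolding xs_def uw R_def by simp
    then have "pop xs (Fj j) = pop (concat (map (\<lambda>j. lst (\<beta> j) D) us)) (pop (lst (\<beta> j) D) (pop R (Fj j)))"
      by (simp add: pop_append)
    also have "pop (lst (\<beta> j) D) (pop R (Fj j)) = pop R (pop (lst (\<beta> j) D) (Fj j))" by (rule pop_comm)
    also have "\<dots> = (\<lambda>n. 0)" by (simp add: killF pop_zero)
    finally show ?thesis by (simp add: pop_zero)
  qed
  have p1: "pop xs (Fj i) = (\<lambda>n. 0)"
  proof -
    have "pop xs (Fj i) = (\<lambda>n. pop xs Z n - pop xs (\<lambda>n. \<Sum>j\<in>{..<r} - {i}. Fj j n) n)"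
      unfolding Fi by (rule pop_diff)
    also have "\<dots> = (\<lambda>n. 0 - (\<Sum>j\<in>{..<r} - {i}. pop xs (Fj j) n))"
      unfolding popZ pop_sum by simp
    also have "\<dots> = (\<lambda>n. 0)"
      by (rule ext) (simp add: popFj)
    finally show ?thesis .
  qed
  have p2: "pop (lst (\<beta> i) D) (Fj i) = (\<lambda>n. 0)" by (rule killF)
  have disj: "set xs \<inter> set (lst (\<beta> i) D) = {}"
  proof (rule ccontr)
    assume "set xs \<inter> set (lst (\<beta> i) D) \<noteq> {}"
    then obtain x where x: "x \<in> set xs" "x \<in> set (lst (\<beta> i) D)" by blast
    from x(2) obtain k' where k': "x = \<beta> i - of_nat k'" unfolding lst_def by auto
    from x(1) consider (a) j k where "j < r" "j \<noteq> i" "x = \<beta> j - of_nat k" | (b) k where "x = 0 - of_nat k"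
      unfolding xs_def lst_def by auto
    then show False
    proof cases
      case a
      then have "\<beta> i - \<beta> j = of_nat k' - of_nat k" using k' by (simp add: algebra_simps)
      moreover have "(of_nat k' - of_nat k :: 'k) \<in> \<int>" by (intro Ints_diff Ints_of_nat)
      ultimately show False using dist a i(1) by metis
    next
      case b
      then have "\<beta> i = of_nat k' - of_nat k" using k' by (simp add: algebra_simps)
      moreover have "(of_nat k' - of_nat k :: 'k) \<in> \<int>" by (intro Ints_diff Ints_of_nat)
      ultimately show False using i(2) by simp
    qed
  qed
  have "Fj i = (\<lambda>n. 0)" by (rule pop_coprime[OF disj p1 p2])
  then have "\<forall>n. conv (\<beta> i) (Q i) n = 0" using convF[OF i(1)] by simp
  then show ?thesis by (rule conv_zero_imp)
qed


lemma step1: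
  fixes r i :: nat and H :: "nat \<Rightarrow> ('k, 'v) dist" and \<beta> :: "nat \<Rightarrow> 'k"
  assumes box: "\<forall>j<r. \<forall>e3 e4. \<exists>M. boxM (H j) v e3 e4 M"
    and alb: "\<forall>j<r. \<exists>S. finite S \<and> asupp (H j) v S"
    and van: "\<forall>e2 e4. e2 \<noteq> 0 \<longrightarrow> (\<Sum>j<r. mult_pow scale 0 (- \<beta> j) (H j) (e1,e2,e3,e4) v) = 0"
    and dist: "\<forall>i<r. \<forall>j<r. i \<noteq> j \<longrightarrow> \<beta> i - \<beta> j \<notin> \<int>"
    and i: "i < r" "\<beta> i \<notin> \<int>"
  shows "H i (e1,e2s,e3,e4s) v = 0"
proof -
  have "\<forall>j. \<exists>S. j < r \<longrightarrow> finite S \<and> asupp (H j) v S" using alb by blast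
  then have "\<exists>SS. \<forall>j. j < r \<longrightarrow> finite (SS j) \<and> asupp (H j) v (SS j)" by (rule choice)
  then obtain SS where SS: "\<forall>j. j < r \<longrightarrow> finite (SS j) \<and> asupp (H j) v (SS j)" by blast
  define U where "U = (\<Union>j<r. SS j)"
  have finU: "finite U" unfolding U_def using SS by auto
  define N where "N = e2s + e4s - \<beta> i"
  obtain L where L: "\<forall>a\<in>(\<lambda>s. snd s - e4s) ` U. a \<in> \<int> \<longrightarrow> a + of_nat L \<in> \<nat>"
    using exists_bound_L[of "(\<lambda>s. snd s - e4s) ` U"] finU by blast
  define b where "b = e4s - of_nat L"
  define Q where "Q j k = H j (e1, N + \<beta> j - (b + of_nat k), e3, b + of_nat k) v" for j k
  define A where "A = (\<Union>j<r. (\<lambda>s. N + \<beta> j - b - fst s) ` SS j)"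
  have finA: "finite A" unfolding A_def using SS by auto
  obtain D where D: "\<forall>a\<in>A. \<forall>k. a - of_nat k \<in> \<nat> \<longrightarrow> k < D" using exists_bound_D[OF finA] by blast
  have Qz: "\<forall>j<r. \<forall>k\<ge>D. Q j k = 0"
  proof (intro allI impI; rule ccontr)
    fix j k assume jk: "j < r" "D \<le> k" "Q j k \<noteq> 0"
    then obtain s2 s4 where s: "(s2,s4) \<in> SS j" "N + \<beta> j - (b + of_nat k) - s2 \<in> \<nat>"
      using SS unfolding Q_def asupp_def by blast
    have "N + \<beta> j - b - s2 \<in> A" unfolding A_def using jk(1) s(1) by force
    moreover have "(N + \<beta> j - b - s2) - of_nat k \<in> \<nat>" using s(2) by (simp add: algebra_simps)
    ultimately have "k < D" using D by blast
    then show False using jk(2) by simp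
  qed
  have below: "H j (x1, x2, e3, b - of_nat d) v = 0" if jr: "j < r" and dpos: "d > 0" for j x1 x2 d
  proof (rule ccontr)
    assume "H j (x1, x2, e3, b - of_nat d) v \<noteq> 0"
    then obtain s2 s4 where s: "(s2,s4) \<in> SS j" "b - of_nat d - s4 \<in> \<nat>"
      using SS jr unfolding asupp_def by blast
    then obtain n where n: "b - of_nat d - s4 = of_nat n" by (auto elim: Nats_cases)
    have a: "s4 - e4s = of_int (- int (L + d + n))" using n unfolding b_def by (simp add: algebra_simps)
    have "(s2,s4) \<in> U" unfolding U_def using s(1) jr by blast
    then have "s4 - e4s + of_nat L \<in> \<nat>" using L a by force
    then obtain m where "s4 - e4s + of_nat L = of_nat m" by (auto elim: Nats_cases)
    then have "(of_int (- int (d + n)) :: 'k) = of_int (int m)" using a by simp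
    then have "- int (d + n) = int m" using of_int_eq_iff by blast
    then show False using dpos by simp
  qed
  have chain: "conv (\<beta> j) (Q j) k = mult_pow scale 0 (- \<beta> j) (H j) (e1, N - (b + of_nat k), e3, b + of_nat k) v"
    if j: "j < r" for j k
  proof -
    obtain M where M: "boxM (H j) v e3 (b + of_nat k) M" using box j by blast
    define g where "g p = scale ((-1) ^ p * ((- \<beta> j) gchoose p))
        (H j (e1, N - (b + of_nat k) - - \<beta> j + of_nat p, e3, b + of_nat k - of_nat p) v)" for p
    have R: "mult_pow scale 0 (- \<beta> j) (H j) (e1, N - (b + of_nat k), e3, b + of_nat k) v = (\<Sum>p\<le>M. g p)"
      unfolding g_def by (rule anti_box[OF M])
    have Lc: "conv (\<beta> j) (Q j) k = (\<Sum>p\<le>k. g p)"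
      unfolding conv_def
    proof (rule sum.cong[OF refl])
      fix p assume "p \<in> {..k}"
      then have pk: "p \<le> k" by simp
      have 1: "b + of_nat (k - p) = b + of_nat k - of_nat p" using pk by (simp add: of_nat_diff)
      have 2: "N + \<beta> j - (b + of_nat k - of_nat p) = N - (b + of_nat k) - - \<beta> j + of_nat p" by (simp add: algebra_simps)
      show "scale (cf (\<beta> j) p) (Q j (k - p)) = g p"
        unfolding g_def Q_def cf_def 1 2 ..
    qed
    have "(\<Sum>p\<le>k. g p) = (\<Sum>p\<le>M + k. g p)"
    proof (rule sum.mono_neutral_left)
      show "\<forall>p\<in>{..M + k} - {..k}. g p = 0"
      proof
        fix p assume "p \<in> {..M + k} - {..k}"
        then have "p > k" by simp
        then have eq: "b + of_nat k - of_nat p = b - of_nat (p - k)" by (simp add: of_nat_diff algebra_simps)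
        have z: "H j (e1, N - (b + of_nat k) - - \<beta> j + of_nat p, e3, b - of_nat (p - k)) v = 0"
          by (rule below[OF j]) (use \<open>p > k\<close> in simp)
        show "g p = 0" unfolding g_def eq z by simp
      qed
    qed auto
    also have "\<dots> = (\<Sum>p\<le>M. g p)"
    proof (rule sum.mono_neutral_right)
      show "\<forall>p\<in>{..M + k} - {..M}. g p = 0"
      proof
        fix p assume "p \<in> {..M + k} - {..M}"
        then have "\<not> p \<le> M" by simp
        then have "H j (e1, N - (b + of_nat k) - - \<beta> j + of_nat p, e3 - of_nat 0, b + of_nat k - of_nat p) v = 0"
          using M unfolding boxM_def by blast
        then show "g p = 0" unfolding g_def by simp
      qed
    qed auto
    finally show ?thesis using Lc R by simp
  qed
  have hyp: "\<exists>k0. \<forall>k. k \<noteq> k0 \<longrightarrow> (\<Sum>j<r. conv (\<beta> j) (Q j) k) = 0"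
  proof -
    have z: "(\<Sum>j<r. conv (\<beta> j) (Q j) k) = 0" if "N - (b + of_nat k) \<noteq> 0" for k
    proof -
      have "(\<Sum>j<r. conv (\<beta> j) (Q j) k) = (\<Sum>j<r. mult_pow scale 0 (- \<beta> j) (H j) (e1, N - (b + of_nat k), e3, b + of_nat k) v)"
        by (intro sum.cong refl chain) simp
      also have "\<dots> = 0" using van that by blast
      finally show ?thesis .
    qed
    show ?thesis
    proof (cases "\<exists>k0. N - (b + of_nat k0) = 0")
      case True
      then obtain k0 where k0: "N - (b + of_nat k0) = 0" by blast
      have "N - (b + of_nat k) \<noteq> 0" if "k \<noteq> k0" for k
      proof
        assume "N - (b + of_nat k) = 0"
        then have "(of_nat k :: 'k) = of_nat k0" using k0 by (simp add: algebra_simps)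
        then show False using that by simp
      qed
      then show ?thesis using z by blast
    next
      case False
      then show ?thesis using z by blast
    qed
  qed
  then obtain k0 where k0: "\<forall>k. k \<noteq> k0 \<longrightarrow> (\<Sum>j<r. conv (\<beta> j) (Q j) k) = 0" by blast
  have "Q i L = 0" by (rule IL[OF Qz dist k0 i])
  moreover have "Q i L = H i (e1,e2s,e3,e4s) v" unfolding Q_def b_def N_def by (simp add: algebra_simps)
  ultimately show ?thesis by simp
qed


lemma alb_holo:
  assumes "alb Y"
  shows "alb (mult_pow scale h 0 Y)"
  unfolding alb_def
proof
  fix v
  obtain S where S: "finite S" "asupp Y v S" using assms unfolding alb_def by blast
  have "asupp (mult_pow scale h 0 Y) v S"
    unfolding asupp_def
  proof (intro allI impI)
    fix e1 e2 e3 e4 assume nz: "mult_pow scale h 0 Y (e1, e2, e3, e4) v \<noteq> 0"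
    obtain p1 p2 where p: "Y (e1 - h + of_nat p1, e2 - 0 + of_nat p2, e3 - of_nat p1, e4 - of_nat p2) v \<noteq> 0"
      "scale ((-1) ^ (p1 + p2) * (h gchoose p1) * (0 gchoose p2))
       (Y (e1 - h + of_nat p1, e2 - 0 + of_nat p2, e3 - of_nat p1, e4 - of_nat p2) v) \<noteq> 0"
      using mult_pow_nz[OF nz] by blast
    have "p2 = 0" using p(2) by (auto simp: gbinomial_0_left split: if_splits)
    then have "Y (e1 - h + of_nat p1, e2, e3 - of_nat p1, e4) v \<noteq> 0" using p(1) by simp
    then show "\<exists>s2 s4. (s2, s4) \<in> S \<and> e2 - s2 \<in> \<nat> \<and> e4 - s4 \<in> \<nat>"
      using S(2) unfolding asupp_def by blast
  qed
  then show "\<exists>S. finite S \<and> asupp (mult_pow scale h 0 Y) v S" using S(1) by blast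
qed

lemma main:
  fixes a :: "('k, 'v) dist" and r :: nat and hs :: "nat \<Rightarrow> 'k \<times> 'k" and cs :: "nat \<Rightarrow> ('k, 'v) dist"
  assumes ind: "indep_zbar a" and red: "reduced_ope scale a r hs cs" and kc: "\<forall>i<r. hs i \<in> Kcheck"
  shows "r \<le> 1 \<and> (r = 1 \<longrightarrow> fst (hs 0) \<in> \<int> \<and> snd (hs 0) = 0)"
proof -
  have fields: "\<forall>i<r. is_field scale (cs i)"
    and aeq: "\<forall>e v. a e v = (\<Sum>i<r. mult_pow scale (- fst (hs i)) (- snd (hs i)) (cs i) e v)"
    and nz: "\<forall>i<r. cs i \<noteq> (\<lambda>e v. 0)"
    and dist0: "\<forall>i<r. \<forall>j<r. i \<noteq> j \<longrightarrow> \<not> (fst (hs i) - fst (hs j) \<in> \<int> \<and> snd (hs i) - snd (hs j) \<in> \<int>)"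
    and red4: "\<forall>i<r. \<forall>n nb :: nat. (n, nb) \<noteq> (0, 0) \<longrightarrow>
        \<not> is_field scale (mult_pow scale (- of_nat n) (- of_nat nb) (cs i))"
  proof -
    have R: "is_ope scale a r hs cs" "\<forall>i<r. cs i \<noteq> (\<lambda>e v. 0)"
      "\<forall>i<r. \<forall>j<r. i \<noteq> j \<longrightarrow> \<not> (fst (hs i) - fst (hs j) \<in> \<int> \<and> snd (hs i) - snd (hs j) \<in> \<int>)"
      "\<forall>i<r. \<forall>n nb :: nat. (n, nb) \<noteq> (0, 0) \<longrightarrow>
        \<not> is_field scale (mult_pow scale (- of_nat n) (- of_nat nb) (cs i))"
      using red unfolding reduced_ope_def
      by (rule conjunct1, rule conjunct1[OF conjunct2], rule conjunct1[OF conjunct2[OF conjunct2]],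
          rule conjunct2[OF conjunct2[OF conjunct2]])
    moreover have "\<forall>i<r. is_field scale (cs i)" "\<forall>e v. a e v = (\<Sum>i<r. mult_pow scale (- fst (hs i)) (- snd (hs i)) (cs i) e v)"
      using R(1) unfolding is_ope_def by (rule conjunct1, rule conjunct2)
    ultimately show "\<forall>i<r. is_field scale (cs i)"
    and "\<forall>e v. a e v = (\<Sum>i<r. mult_pow scale (- fst (hs i)) (- snd (hs i)) (cs i) e v)"
    and "\<forall>i<r. cs i \<noteq> (\<lambda>e v. 0)"
    and "\<forall>i<r. \<forall>j<r. i \<noteq> j \<longrightarrow> \<not> (fst (hs i) - fst (hs j) \<in> \<int> \<and> snd (hs i) - snd (hs j) \<in> \<int>)"
    and "\<forall>i<r. \<forall>n nb :: nat. (n, nb) \<noteq> (0, 0) \<longrightarrow>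
        \<not> is_field scale (mult_pow scale (- of_nat n) (- of_nat nb) (cs i))"
      by simp_all
  qed
  define h where "h i = fst (hs i)" for i
  define hb where "hb i = snd (hs i)" for i
  have kc': "h i - hb i \<in> \<int>" if "i < r" for i
    using kc that unfolding Kcheck_def h_def hb_def by (auto simp: case_prod_beta)
  define H where "H i = mult_pow scale (- h i) 0 (cs i)" for i
  have fct: "mult_pow scale (- h i) (- hb i) (cs i) = mult_pow scale 0 (- hb i) (H i)" if "i < r" for i
    unfolding H_def by (rule fact_ah[OF field_wlb]) (use fields that in blast)
  have Hbox: "\<forall>v e3 e4. \<exists>M. boxM (H i) v e3 e4 M" if "i < r" for i
  proof -
    have "wlb (H i)" unfolding H_def by (rule wlb_mult_pow[OF field_wlb]) (use fields that in blast)
    then show ?thesis using wlb_boxM by blast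
  qed
  have cbox: "\<forall>v e3 e4. \<exists>M. boxM (cs i) v e3 e4 M" if "i < r" for i
  proof -
    have "wlb (cs i)" by (rule field_wlb) (use fields that in blast)
    then show ?thesis using wlb_boxM by blast
  qed
  have Halb: "alb (H i)" if "i < r" for i
    unfolding H_def by (rule alb_holo[OF field_alb]) (use fields that in blast)
  have a0: "a (e1,e2,e3,e4) v = 0" if "e2 \<noteq> 0" for e1 e2 e3 e4 v
    using ind that unfolding indep_zbar_def by blast
  have czero: "cs i = (\<lambda>e v. 0)" if i: "i < r" and Hz: "\<forall>e v. H i e v = 0" for i
  proof (intro ext)
    fix e :: "'k \<times> 'k \<times> 'k \<times> 'k" and v
    obtain e1 e2 e3 e4 where e: "e = (e1,e2,e3,e4)" by (cases e) auto
    have B: "\<forall>e3 e4. \<exists>M. boxM (cs i) v e3 e4 M" using cbox[OF i] by blast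
    have V: "\<forall>e1 e2 e3 e4. (\<lambda>_ _. True) e2 e4 \<longrightarrow> mult_pow scale (- h i) 0 (cs i) (e1, e2, e3, e4) v = 0"
      using Hz unfolding H_def by simp
    have "cs i (e1,e2,e3,e4) v = 0" using holo_inv[OF B V] by simp
    then show "cs i e v = 0" using e by simp
  qed
  have hbZ: "hb i \<in> \<int>" if i: "i < r" for i
  proof (rule ccontr)
    assume nI: "hb i \<notin> \<int>"
    have dist: "\<forall>i<r. \<forall>j<r. i \<noteq> j \<longrightarrow> hb i - hb j \<notin> \<int>"
    proof (intro allI impI notI)
      fix i j assume ij: "i < r" "j < r" "i \<noteq> j" "hb i - hb j \<in> \<int>"
      have "h i - h j = (h i - hb i) - (h j - hb j) + (hb i - hb j)" by simp
      also have "\<dots> \<in> \<int>" using kc'[OF ij(1)] kc'[OF ij(2)] ij(4) by (rule Ints_add[OF Ints_diff])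
      finally show False using dist0 ij unfolding h_def hb_def by blast
    qed
    have "\<forall>e v. H i e v = 0"
    proof (intro allI)
      fix e :: "'k \<times> 'k \<times> 'k \<times> 'k" and v
      obtain e1 e2 e3 e4 where e: "e = (e1,e2,e3,e4)" by (cases e) auto
      have van: "\<forall>e2 e4. e2 \<noteq> 0 \<longrightarrow> (\<Sum>j<r. mult_pow scale 0 (- hb j) (H j) (e1,e2,e3,e4) v) = 0"
      proof (intro allI impI)
        fix e2 e4 :: 'k assume "e2 \<noteq> 0"
        have "a (e1,e2,e3,e4) v = (\<Sum>j<r. mult_pow scale (- h j) (- hb j) (cs j) (e1,e2,e3,e4) v)"
          using aeq unfolding h_def hb_def by blast
        also have "\<dots> = (\<Sum>j<r. mult_pow scale 0 (- hb j) (H j) (e1,e2,e3,e4) v)"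
          by (intro sum.cong refl) (simp add: fct)
        finally have "(\<Sum>j<r. mult_pow scale 0 (- hb j) (H j) (e1,e2,e3,e4) v) = a (e1,e2,e3,e4) v" by simp
        then show "(\<Sum>j<r. mult_pow scale 0 (- hb j) (H j) (e1,e2,e3,e4) v) = 0" using a0 \<open>e2 \<noteq> 0\<close> by simp
      qed
      have "H i (e1,e2,e3,e4) v = 0"
        by (rule step1[OF _ _ van dist i nI]) (use Hbox Halb in \<open>auto simp: alb_def\<close>)
      then show "H i e v = 0" using e by simp
    qed
    then have "cs i = (\<lambda>e v. 0)" using czero i by blast
    then show False using nz i by blast
  qed
  have r1: "r \<le> 1"
  proof (rule ccontr)
    assume "\<not> r \<le> 1"
    then have r: "0 < r" "1 < r" by auto
    have "hb 0 - hb 1 \<in> \<int>" using hbZ r by (intro Ints_diff) auto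
    moreover have "h 0 - h 1 = (h 0 - hb 0) - (h 1 - hb 1) + (hb 0 - hb 1)" by simp
    ultimately have "h 0 - h 1 \<in> \<int>" using kc' r by (metis Ints_add Ints_diff)
    then have "fst (hs 0) - fst (hs 1) \<in> \<int> \<and> snd (hs 0) - snd (hs 1) \<in> \<int>"
      using \<open>hb 0 - hb 1 \<in> \<int>\<close> unfolding h_def hb_def by simp
    moreover have "\<not> (fst (hs 0) - fst (hs 1) \<in> \<int> \<and> snd (hs 0) - snd (hs 1) \<in> \<int>)"
      using dist0 r by simp
    ultimately show False by blast
  qed
  have r2: "fst (hs 0) \<in> \<int> \<and> snd (hs 0) = 0" if r: "r = 1"
  proof -
    have r0: "0 < r" using r by simp
    have aT: "a e v = mult_pow scale (- h 0) (- hb 0) (cs 0) e v" for e v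
    proof -
      have "a e v = (\<Sum>i<r. mult_pow scale (- fst (hs i)) (- snd (hs i)) (cs i) e v)" using aeq by blast
      then show ?thesis using r unfolding h_def hb_def by simp
    qed
    have f0: "is_field scale (cs 0)" using fields r0 by blast
    have hb0: "hb 0 = 0"
    proof (rule ccontr)
      assume ne: "hb 0 \<noteq> 0"
      obtain z where z: "hb 0 = of_int z" using hbZ[OF r0] by (auto elim: Ints_cases)
      show False
      proof (cases "z < 0")
        case True
        define m where "m = nat (- z)"
        have m: "m \<ge> 1" "- hb 0 = of_nat m" using True z unfolding m_def by simp_all
        have "\<forall>e v. H 0 e v = 0"
        proof (intro allI)
          fix e :: "'k \<times> 'k \<times> 'k \<times> 'k" and v
          obtain e1 e2 e3 e4 where e: "e = (e1,e2,e3,e4)" by (cases e) auto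
          obtain S where S: "finite S" "asupp (H 0) v S" using Halb[OF r0] unfolding alb_def by blast
          have van: "\<forall>e2 e4. e2 \<noteq> 0 \<longrightarrow> mult_pow scale 0 (of_nat m) (H 0) (e1,e2,e3,e4) v = 0"
          proof (intro allI impI)
            fix e2 e4 :: 'k assume "e2 \<noteq> 0"
            have "mult_pow scale 0 (of_nat m) (H 0) = mult_pow scale (- h 0) (- hb 0) (cs 0)"
              using fct[OF r0] m(2) by simp
            then have "mult_pow scale 0 (of_nat m) (H 0) (e1,e2,e3,e4) v = a (e1,e2,e3,e4) v"
              using aT by simp
            then show "mult_pow scale 0 (of_nat m) (H 0) (e1,e2,e3,e4) v = 0" using a0 \<open>e2 \<noteq> 0\<close> by simp
          qed
          have "H 0 (e1,e2,e3,e4) v = 0"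
            by (rule anti_neg[OF _ S m(1) van]) (use Hbox[OF r0] in blast)
          then show "H 0 e v = 0" using e by simp
        qed
        then have "cs 0 = (\<lambda>e v. 0)" by (rule czero[OF r0])
        then show False using nz r0 by simp
      next
        case False
        with ne z have zp: "z > 0" by auto
        define m where "m = nat z"
        have m: "m \<ge> 1" "hb 0 = of_nat m" using zp z unfolding m_def by simp_all
        define X where "X = mult_pow scale 0 (- hb 0) (cs 0)"
        have Xbox: "\<forall>v e3 e4. \<exists>M. boxM X v e3 e4 M"
        proof -
          have "wlb X" unfolding X_def by (rule wlb_mult_pow[OF field_wlb[OF f0]])
          then show ?thesis using wlb_boxM by blast
        qed
        have hX: "mult_pow scale (- h 0) 0 X = mult_pow scale (- h 0) (- hb 0) (cs 0)"
          unfolding X_def by (rule fact_ha[OF field_wlb[OF f0], symmetric])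
        have Xz: "\<forall>e1 e2 e3 e4 v. e2 \<noteq> 0 \<longrightarrow> X (e1,e2,e3,e4) v = 0"
        proof (intro allI impI)
          fix e1 e2 e3 e4 v assume "(e2::'k) \<noteq> 0"
          have B: "\<forall>e3 e4. \<exists>M. boxM X v e3 e4 M" using Xbox by blast
          have V: "\<forall>e1 e2 e3 e4. (\<lambda>e2 e4. e2 \<noteq> 0) e2 e4 \<longrightarrow> mult_pow scale (- h 0) 0 X (e1, e2, e3, e4) v = 0"
          proof (intro allI impI)
            fix e1 e2 e3 e4 :: 'k assume "(\<lambda>e2 e4. e2 \<noteq> 0) e2 e4"
            then have "e2 \<noteq> 0" by simp
            have "mult_pow scale (- h 0) 0 X (e1,e2,e3,e4) v = a (e1,e2,e3,e4) v" using hX aT by simp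
            then show "mult_pow scale (- h 0) 0 X (e1,e2,e3,e4) v = 0" using a0 \<open>e2 \<noteq> 0\<close> by simp
          qed
          show "X (e1,e2,e3,e4) v = 0" using holo_inv[OF B V] \<open>e2 \<noteq> 0\<close> by simp
        qed
        have "is_field scale X" unfolding X_def
          by (rule anti_pos_field[OF f0]) (use Xz in \<open>simp add: X_def\<close>)
        moreover have "\<not> is_field scale (mult_pow scale (- of_nat 0) (- of_nat m) (cs 0))"
        proof -
          have "(0::nat, m) \<noteq> (0, 0)" using m(1) by simp
          then show ?thesis using red4 r0 by blast
        qed
        ultimately show False unfolding X_def using m(2) by simp
      qed
    qed
    have "h 0 \<in> \<int>" using kc'[OF r0] hb0 by simp
    then show ?thesis using hb0 unfolding h_def hb_def by simp
  qed
  show ?thesis using r1 r2 by blast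
qed

end

theorem mainTheorem10:
  fixes scale :: "'k::field_char_0 \<Rightarrow> 'v::ab_group_add \<Rightarrow> 'v"
    and a :: "('k, 'v) dist"
    and r :: nat and hs :: "nat \<Rightarrow> 'k \<times> 'k" and cs :: "nat \<Rightarrow> ('k, 'v) dist"
  assumes "vector_space scale"
    and "end_dist scale a"
    and "indep_zbar a"
    and "ope_finite scale a"
    and "reduced_ope scale a r hs cs"
    and "\<forall>i<r. hs i \<in> Kcheck"
  shows "r \<le> 1 \<and> (r = 1 \<longrightarrow> fst (hs 0) \<in> \<int> \<and> snd (hs 0) = 0)"
proof -
  interpret V: vs0 scale by (rule vs0.intro) (rule assms(1))
  show ?thesis by (rule V.main[OF assms(3) assms(5) assms(6)])
qed

end
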